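(* Let $R$ be a full-rank order of rank $n$ in the number field $K=\mathrm{Q}(R)$, let $p$ be a prime and let $a\in\mathbb{Z}_{>0}$ satisfy $0<\operatorname{ord}_p(a)<\operatorname{ord}_p(\delta(R))$. If the ideal $\delta(R)R^\dagger+aR\subseteq R$ is invertible at $p$, then $p\le n$.
   Context: An order is a domain whose additive group is isomorphic to $\mathbb{Z}^n$ ($n$ its rank); $\mathrm{Q}(R)$ is its field of fractions, a number field of degree $n$. For an additive subgroup $I\subseteq K$, the trace dual is $I^\dagger=\{x\in K:\operatorname{Tr}_{K/\mathbb{Q}}(xI)\subseteq\mathbb{Z}\}$. The reduced discriminant $\delta(R)$ is the exponent of the finite abelian group $R^\dagger/R$. For a rational prime $p$, $R_p$ denotes the localization of $R$ at $p$ as a $\mathbb{Z}$-algebra (i.e. $\mathbb{Z}_{(p)}\otimes R$), and a fractional ideal $I$ of $R$ is invertible at $p$ if $IR_p$ is an invertible ideal of $R_p$, i.e. $(IR_p)J=R_p$ for some $R_p$-submodule $J\subseteq K$. *)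

theory Defs
  imports "HOL-Computational_Algebra.Computational_Algebra"
begin

text \<open>Orders are modelled as subrings of an ambient field of characteristic 0
(every order embeds in its fraction field, which has characteristic 0).\<close>

definition is_order :: "'a::field_char_0 set \<Rightarrow> nat \<Rightarrow> bool" where
  "is_order R n \<longleftrightarrow>
     1 \<in> R \<and> (\<forall>x\<in>R. \<forall>y\<in>R. x + y \<in> R \<and> - x \<in> R \<and> x * y \<in> R) \<and>
     (\<exists>b :: nat \<Rightarrow> 'a.
        R = {\<Sum>i<n. of_int (c i) * b i | c. True} \<and>
        (\<forall>c. (\<Sum>i<n. of_int (c i) * b i) = 0 \<longrightarrow> (\<forall>i<n. c i = 0)))"

definition frac_field :: "'a::field set \<Rightarrow> 'a set" where
  "frac_field R = {x / y | x y. x \<in> R \<and> y \<in> R \<and> y \<noteq> 0}"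

definition is_Q_basis :: "'a::field_char_0 set \<Rightarrow> (nat \<Rightarrow> 'a) \<Rightarrow> nat \<Rightarrow> bool" where
  "is_Q_basis K b n \<longleftrightarrow> (\<forall>i<n. b i \<in> K) \<and>
     (\<forall>x\<in>K. \<exists>!c::nat \<Rightarrow> rat. (\<forall>j\<ge>n. c j = 0) \<and> x = (\<Sum>j<n. of_rat (c j) * b j))"

definition Q_coords :: "(nat \<Rightarrow> 'a::field_char_0) \<Rightarrow> nat \<Rightarrow> 'a \<Rightarrow> nat \<Rightarrow> rat" where
  "Q_coords b n x = (THE c. (\<forall>j\<ge>n. c j = 0) \<and> x = (\<Sum>j<n. of_rat (c j) * b j))"

text \<open>Tr_{K/Q}(x): trace of multiplication by x on K as Q-vector space,
  computed in a (chosen) Q-basis of K.\<close>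
definition field_trace :: "'a::field_char_0 set \<Rightarrow> 'a \<Rightarrow> rat" where
  "field_trace K x = (let (b, n) = (SOME (b, n). is_Q_basis K b n)
                      in \<Sum>i<n. Q_coords b n (x * b i) i)"

definition trace_dual :: "'a::field_char_0 set \<Rightarrow> 'a set \<Rightarrow> 'a set" where
  "trace_dual K I = {x \<in> K. \<forall>y\<in>I. field_trace K (x * y) \<in> \<int>}"

definition red_disc :: "'a::field_char_0 set \<Rightarrow> nat" where
  "red_disc R = (LEAST d::nat. d > 0 \<and>
      (\<forall>x\<in>trace_dual (frac_field R) R. of_nat d * x \<in> R))"

text \<open>R_p = Z_(p) \<otimes> R.\<close>
definition loc_at :: "nat \<Rightarrow> 'a::field_char_0 set \<Rightarrow> 'a set" where
  "loc_at p R = {r / of_nat s | r s. r \<in> R \<and> \<not> p dvd s}"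

definition ideal_mult :: "'a::field set \<Rightarrow> 'a set \<Rightarrow> 'a set" where
  "ideal_mult A B = {\<Sum>i<m. f i * g i | (m::nat) f g. \<forall>i<m. f i \<in> A \<and> g i \<in> B}"

definition invertible_at :: "'a::field_char_0 set \<Rightarrow> nat \<Rightarrow> 'a set \<Rightarrow> bool" where
  "invertible_at R p I \<longleftrightarrow>
     (\<exists>J. J \<subseteq> frac_field R \<and> 0 \<in> J \<and> (\<forall>x\<in>J. \<forall>y\<in>J. x + y \<in> J) \<and>
          (\<forall>r\<in>loc_at p R. \<forall>x\<in>J. r * x \<in> J) \<and>
          ideal_mult (ideal_mult I (loc_at p R)) J = loc_at p R)"

end

theory Submission
  imports Defs "Jordan_Normal_Form.Determinant"
begin

lemma dvd_helper: "(p::int) dvd x - y \<Longrightarrow> p dvd x - (z - 1) \<Longrightarrow> p dvd z - (y + 1)"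
proof -
  assume "p dvd x - y" "p dvd x - (z - 1)"
  then have "p dvd (x - y) - (x - (z - 1))" by (rule dvd_diff)
  moreover have "(x - y) - (x - (z - 1)) = z - (y + 1)" by simp
  ultimately show ?thesis by simp
qed

lemma dvd_comb1:
  fixes p A B C Dd u vi vk Ekl Eki Eil Eii :: int
  assumes "p dvd (A + Eki*Eil) - Ekl" "p dvd (B + Eki*vi) - vk" "p dvd (C + Eii*Eil) - Eil"
   "p dvd (Dd + Eii*vi) - vi" "p dvd u*vi - 1"
  shows "p dvd (A - u*Eil*B - u*vk*C + u^2*vk*Eil*Dd) - (Ekl - u*vk*Eil)"
proof -
  define e1 where "e1 = (A + Eki*Eil) - Ekl"
  define e2 where "e2 = (B + Eki*vi) - vk"
  define e3 where "e3 = (C + Eii*Eil) - Eil"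
  define e4 where "e4 = (Dd + Eii*vi) - vi"
  define e5 where "e5 = u*vi - 1"
  have eq: "(A - u*Eil*B - u*vk*C + u^2*vk*Eil*Dd) - (Ekl - u*vk*Eil)
      = e1 - (u*Eil)*e2 - (u*vk)*e3 + (u^2*vk*Eil)*e4 + (Eki*Eil + u*vk*Eil - u*vk*Eii*Eil)*e5"
    unfolding e1_def e2_def e3_def e4_def e5_def by (simp add: algebra_simps power2_eq_square)
  have "p dvd e1 - (u*Eil)*e2 - (u*vk)*e3 + (u^2*vk*Eil)*e4 + (Eki*Eil + u*vk*Eil - u*vk*Eii*Eil)*e5"
    using assms unfolding e1_def[symmetric] e2_def[symmetric] e3_def[symmetric] e4_def[symmetric] e5_def[symmetric]
    by (intro dvd_add dvd_diff dvd_mult) auto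
  then show ?thesis unfolding eq .
qed

lemma dvd_comb2:
  fixes p B u vi Eii S' :: int
  assumes "p dvd (B + Eii*vi) - vi" "p dvd u*vi - 1"
  shows "p dvd (S' - u * B) - ((Eii + S') - 1)"
proof -
  have eq: "(S' - u * B) - ((Eii + S') - 1) = (Eii - 1) * (u*vi - 1) - u * ((B + Eii*vi) - vi)"
    by (simp add: algebra_simps)
  have "p dvd (Eii - 1) * (u*vi - 1)" by (rule dvd_mult[OF assms(2)])
  moreover have "p dvd u * ((B + Eii*vi) - vi)" by (rule dvd_mult[OF assms(1)])
  ultimately show ?thesis unfolding eq by (rule dvd_diff)
qed

lemma idem_trace:
  fixes p :: int and E :: "nat \<Rightarrow> nat \<Rightarrow> int"
  assumes pr: "prime p" and fin: "finite I"
    and idem: "\<forall>a\<in>I. \<forall>c\<in>I. p dvd ((\<Sum>k\<in>I. E a k * E k c) - E a c)"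
    and nz: "\<exists>a\<in>I. \<exists>c\<in>I. \<not> p dvd E a c"
  shows "\<exists>r. 1 \<le> r \<and> r \<le> card I \<and> p dvd ((\<Sum>i\<in>I. E i i) - int r)"
  using fin idem nz
proof (induction I arbitrary: E rule: finite_psubset_induct)
  case (psubset I)
  from psubset.prems(2) obtain i c0 where i: "i \<in> I" and c0: "c0 \<in> I" and nd: "\<not> p dvd E i c0"
    by blast
  define v where "v k = E k c0" for k
  have Ev: "p dvd (\<Sum>k\<in>I. E a k * v k) - v a" if "a \<in> I" for a
    using psubset.prems(1) that c0 unfolding v_def by blast
  have "coprime (v i) p" using nd pr unfolding v_def
    by (metis coprime_commute prime_imp_coprime)
  then have g1: "gcd (v i) p = 1" by simp
  obtain u w where "u * v i + w * p = gcd (v i) p" using bezout_int by blast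
  then have "u * v i - 1 = p * (- w)" using g1 by (simp add: algebra_simps)
  then have u: "p dvd u * v i - 1" by (metis dvd_triv_left)
  define I' where "I' = I - {i}"
  define E' where "E' k l = E k l - u * v k * E i l" for k l
  have fI: "finite I" by fact
  have split: "(\<Sum>m\<in>I. f m) = f i + (\<Sum>m\<in>I'. f m)" for f :: "nat \<Rightarrow> int"
    unfolding I'_def using fI i by (simp add: sum.remove)
  have idem': "\<forall>k\<in>I'. \<forall>l\<in>I'. p dvd ((\<Sum>m\<in>I'. E' k m * E' m l) - E' k l)"
  proof (intro ballI)
    fix k l assume k: "k \<in> I'" and l: "l \<in> I'"
    define A where "A = (\<Sum>m\<in>I'. E k m * E m l)"
    define B where "B = (\<Sum>m\<in>I'. E k m * v m)"
    define C where "C = (\<Sum>m\<in>I'. E i m * E m l)"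
    define Dd where "Dd = (\<Sum>m\<in>I'. E i m * v m)"
    have X: "(\<Sum>m\<in>I'. E' k m * E' m l) = A - u * E i l * B - u * v k * C + u^2 * v k * E i l * Dd"
    proof -
      have "(\<Sum>m\<in>I'. E' k m * E' m l) = (\<Sum>m\<in>I'. E k m * E m l - u * E i l * (E k m * v m)
            - u * v k * (E i m * E m l) + u^2 * v k * E i l * (E i m * v m))"
        unfolding E'_def by (rule sum.cong) (auto simp: algebra_simps power2_eq_square)
      also have "\<dots> = A - u * E i l * B - u * v k * C + u^2 * v k * E i l * Dd"
        unfolding A_def B_def C_def Dd_def
        by (simp add: sum.distrib sum_subtractf sum_distrib_left)
      finally show ?thesis .
    qed
    have kI: "k \<in> I" and lI: "l \<in> I" using k l unfolding I'_def by auto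
    have h1: "p dvd (A + E k i * E i l) - E k l"
    proof -
      have "p dvd (\<Sum>m\<in>I. E k m * E m l) - E k l" using psubset.prems(1) kI lI by blast
      then show ?thesis unfolding A_def split[of "\<lambda>m. E k m * E m l"] by (simp add: add.commute)
    qed
    have h2: "p dvd (B + E k i * v i) - v k"
      using Ev[OF kI] unfolding B_def split[of "\<lambda>m. E k m * v m"] by (simp add: add.commute)
    have h3: "p dvd (C + E i i * E i l) - E i l"
    proof -
      have "p dvd (\<Sum>m\<in>I. E i m * E m l) - E i l" using psubset.prems(1) i lI by blast
      then show ?thesis unfolding C_def split[of "\<lambda>m. E i m * E m l"] by (simp add: add.commute)
    qed
    have h4: "p dvd (Dd + E i i * v i) - v i"
      using Ev[OF i] unfolding Dd_def split[of "\<lambda>m. E i m * v m"] by (simp add: add.commute)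
    have "p dvd (A - u * E i l * B - u * v k * C + u^2 * v k * E i l * Dd) - (E k l - u * v k * E i l)"
      by (rule dvd_comb1[OF h1 h2 h3 h4 u])
    then show "p dvd ((\<Sum>m\<in>I'. E' k m * E' m l) - E' k l)" by (simp only: X) (simp add: E'_def)
  qed
  have tr: "p dvd (\<Sum>k\<in>I'. E' k k) - ((\<Sum>k\<in>I. E k k) - 1)"
  proof -
    define B where "B = (\<Sum>m\<in>I'. E i m * v m)"
    have "(\<Sum>k\<in>I'. E' k k) = (\<Sum>k\<in>I'. E k k) - u * B"
      unfolding E'_def B_def by (simp add: sum_subtractf sum_distrib_left algebra_simps)
    moreover have "(\<Sum>k\<in>I. E k k) = E i i + (\<Sum>k\<in>I'. E k k)" by (rule split)
    moreover have h4: "p dvd (B + E i i * v i) - v i"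
      using Ev[OF i] unfolding B_def split[of "\<lambda>m. E i m * v m"] by (simp add: add.commute)
    ultimately show ?thesis using dvd_comb2[OF h4 u, of "\<Sum>k\<in>I'. E k k"] by simp
  qed
  have sub: "I' \<subset> I" unfolding I'_def using i by auto
  have cI: "card I = Suc (card I')" unfolding I'_def using i fI
    by (metis card_Suc_Diff1)
  show ?case
  proof (cases "\<exists>a\<in>I'. \<exists>c\<in>I'. \<not> p dvd E' a c")
    case True
    from psubset.IH[OF sub idem' True] obtain r where r: "1 \<le> r" "r \<le> card I'"
      "p dvd (\<Sum>i\<in>I'. E' i i) - int r" by blast
    have "p dvd (\<Sum>k\<in>I. E k k) - (int r + 1)"
      using dvd_helper[OF r(3) tr] .
    then show ?thesis using r cI by (intro exI[of _ "Suc r"]) (auto simp: add.commute)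
  next
    case False
    then have "p dvd (\<Sum>k\<in>I'. E' k k)" by (intro dvd_sum) auto
    then have "p dvd (\<Sum>k\<in>I. E k k) - int 1" using dvd_helper[of p _ 0, OF _ tr] by simp
    then show ?thesis using cI by (intro exI[of _ 1]) auto
  qed
qed

lemma lin_solve:
  fixes A :: "nat \<Rightarrow> nat \<Rightarrow> rat" and n :: nat
  assumes inj: "\<And>c. (\<forall>l<n. (\<Sum>k<n. c k * A k l) = 0) \<Longrightarrow> \<forall>k<n. c k = 0"
  shows "\<exists>H. (\<forall>c k. k < n \<longrightarrow> (\<Sum>l<n. H k l * (\<Sum>k'<n. c k' * A k' l)) = c k) \<and>
             (\<forall>e l. l < n \<longrightarrow> (\<Sum>k<n. (\<Sum>l'<n. H k l' * e l') * A k l) = e l)"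
proof -
  define B where "B = mat n n (\<lambda>(l,k). A k l)"
  have Bc: "B \<in> carrier_mat n n" unfolding B_def by simp
  have dB: "det B \<noteq> 0"
  proof
    assume "det B = 0"
    then obtain v where v: "v \<in> carrier_vec n" "v \<noteq> 0\<^sub>v n" "B *\<^sub>v v = 0\<^sub>v n"
      using det_0_iff_vec_prod_zero_field[OF Bc] by blast
    have "\<forall>l<n. (\<Sum>k<n. v $ k * A k l) = 0"
    proof (intro allI impI)
      fix l assume l: "l < n"
      have "(B *\<^sub>v v) $ l = 0" using v(3) l by simp
      then show "(\<Sum>k<n. v $ k * A k l) = 0"
        using l v(1) unfolding B_def by (simp add: scalar_prod_def lessThan_atLeast0 mult.commute)
    qed
    from inj[OF this] have "v = 0\<^sub>v n" using v(1) by (intro eq_vecI) auto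
    with v(2) show False by simp
  qed
  define C where "C = adj_mat B"
  have C: "C \<in> carrier_mat n n" "B * C = det B \<cdot>\<^sub>m 1\<^sub>m n" "C * B = det B \<cdot>\<^sub>m 1\<^sub>m n"
    using adj_mat[OF Bc] unfolding C_def by auto
  have CB: "(\<Sum>l<n. C $$ (k,l) * A k' l) = (if k = k' then det B else 0)" if "k < n" "k' < n" for k k'
  proof -
    have "(C * B) $$ (k,k') = (if k = k' then det B else 0)" using C(3) that by simp
    then show ?thesis using that C(1) unfolding B_def
      by (simp add: scalar_prod_def lessThan_atLeast0)
  qed
  have BC: "(\<Sum>k<n. A k l * C $$ (k,l')) = (if l = l' then det B else 0)" if "l < n" "l' < n" for l l'
  proof -
    have "(B * C) $$ (l,l') = (if l = l' then det B else 0)" using C(2) that C(1) by simp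
    then show ?thesis using that C(1) unfolding B_def
      by (simp add: scalar_prod_def lessThan_atLeast0)
  qed
  define H where "H k l = C $$ (k,l) / det B" for k l
  have 1: "(\<Sum>l<n. H k l * (\<Sum>k'<n. c k' * A k' l)) = c k" if k: "k < n" for c k
  proof -
    have "(\<Sum>l<n. H k l * (\<Sum>k'<n. c k' * A k' l)) = (\<Sum>l<n. \<Sum>k'<n. c k' * (C $$ (k,l) * A k' l) / det B)"
      unfolding H_def by (simp add: sum_distrib_left algebra_simps)
    also have "\<dots> = (\<Sum>k'<n. c k' * (\<Sum>l<n. C $$ (k,l) * A k' l) / det B)"
      by (subst sum.swap) (simp add: sum_distrib_left sum_divide_distrib)
    also have "\<dots> = (\<Sum>k'<n. if k = k' then c k' else 0)"
      by (rule sum.cong) (use k dB CB in auto)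
    also have "\<dots> = c k" using k by simp
    finally show ?thesis .
  qed
  have 2: "(\<Sum>k<n. (\<Sum>l'<n. H k l' * e l') * A k l) = e l" if l: "l < n" for e l
  proof -
    have "(\<Sum>k<n. (\<Sum>l'<n. H k l' * e l') * A k l) = (\<Sum>k<n. \<Sum>l'<n. e l' * (A k l * C $$ (k,l')) / det B)"
      unfolding H_def by (simp add: sum_distrib_right sum_distrib_left algebra_simps)
    also have "\<dots> = (\<Sum>l'<n. e l' * (\<Sum>k<n. A k l * C $$ (k,l')) / det B)"
      by (subst sum.swap) (simp add: sum_distrib_left sum_divide_distrib)
    also have "\<dots> = (\<Sum>l'<n. if l = l' then e l' else 0)"
      by (rule sum.cong) (use l dB BC in auto)
    also have "\<dots> = e l" using l by simp
    finally show ?thesis .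
  qed
  show ?thesis using 1 2 by blast
qed

lemma qb_coords:
  assumes "is_Q_basis K c m" "x \<in> K"
  shows "(\<forall>j\<ge>m. Q_coords c m x j = 0) \<and> x = (\<Sum>j<m. of_rat (Q_coords c m x j) * c j)"
proof -
  from assms have "\<exists>!q::nat\<Rightarrow>rat. (\<forall>j\<ge>m. q j = 0) \<and> x = (\<Sum>j<m. of_rat (q j) * c j)"
    unfolding is_Q_basis_def by blast
  then show ?thesis unfolding Q_coords_def by (rule theI')
qed

lemma qb_unique:
  assumes "is_Q_basis K c m" "x \<in> K" "x = (\<Sum>j<m. of_rat (q j) * c j)" "j < m"
  shows "Q_coords c m x j = q j"
proof -
  define q' where "q' j = (if j < m then q j else 0)" for j
  have x': "x = (\<Sum>j<m. of_rat (q' j) * c j)" unfolding q'_def using assms(3) by simp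
  have q'0: "\<forall>j\<ge>m. q' j = 0" unfolding q'_def by simp
  from assms have ex: "\<exists>!q::nat\<Rightarrow>rat. (\<forall>j\<ge>m. q j = 0) \<and> x = (\<Sum>j<m. of_rat (q j) * c j)"
    unfolding is_Q_basis_def by blast
  have "Q_coords c m x = q'"
    unfolding Q_coords_def by (rule the1_equality[OF ex]) (use q'0 x' in auto)
  then show ?thesis using assms(4) unfolding q'_def by simp
qed

lemma qb_sum:
  assumes B: "is_Q_basis K c m" and fin: "finite A" and y: "\<forall>i\<in>A. y i \<in> K"
    and s: "(\<Sum>i\<in>A. of_rat (r i) * y i) \<in> K" and j: "j < m"
  shows "Q_coords c m (\<Sum>i\<in>A. of_rat (r i) * y i) j = (\<Sum>i\<in>A. r i * Q_coords c m (y i) j)"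
proof -
  have "(\<Sum>i\<in>A. of_rat (r i) * y i) = (\<Sum>i\<in>A. of_rat (r i) * (\<Sum>j<m. of_rat (Q_coords c m (y i) j) * c j))"
    using qb_coords[OF B] y by (intro sum.cong) auto
  also have "\<dots> = (\<Sum>j<m. of_rat (\<Sum>i\<in>A. r i * Q_coords c m (y i) j) * c j)"
    by (simp add: sum_distrib_left sum_distrib_right of_rat_sum of_rat_mult mult.assoc sum.swap[of _ A])
  finally have eq: "(\<Sum>i\<in>A. of_rat (r i) * y i) = (\<Sum>j<m. of_rat (\<Sum>i\<in>A. r i * Q_coords c m (y i) j) * c j)" .
  show ?thesis by (rule qb_unique[OF B s eq j])
qed

lemma trace_basis_indep:
  fixes K :: "'a::field_char_0 set"
  assumes B1: "is_Q_basis K c m" and B2: "is_Q_basis K c' m'"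
    and x: "x \<in> K" and mulK: "\<And>u v. u \<in> K \<Longrightarrow> v \<in> K \<Longrightarrow> u * v \<in> K"
  shows "(\<Sum>i<m'. Q_coords c' m' (x * c' i) i) = (\<Sum>k<m. Q_coords c m (x * c k) k)"
proof -
  have cK: "c k \<in> K" if "k < m" for k using B1 that unfolding is_Q_basis_def by blast
  have c'K: "c' i \<in> K" if "i < m'" for i using B2 that unfolding is_Q_basis_def by blast
  define A where "A i k = Q_coords c m (c' i) k" for i k
  define B where "B k i = Q_coords c' m' (c k) i" for k i
  define M where "M k l = Q_coords c m (x * c k) l" for k l
  have c'exp: "c' i = (\<Sum>k<m. of_rat (A i k) * c k)" if "i < m'" for i
    using qb_coords[OF B1 c'K[OF that]] unfolding A_def by blast
  have cexp: "c k = (\<Sum>i<m'. of_rat (B k i) * c' i)" if "k < m" for k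
    using qb_coords[OF B2 cK[OF that]] unfolding B_def by blast
  have xcexp: "x * c k = (\<Sum>l<m. of_rat (M k l) * c l)" if "k < m" for k
    using qb_coords[OF B1 mulK[OF x cK[OF that]]] unfolding M_def by blast
  have BA: "(\<Sum>i<m'. B l i * A i k) = (if l = k then 1 else 0)" if l: "l < m" and k: "k < m" for l k
  proof -
    have "Q_coords c m (c l) k = (\<Sum>i<m'. B l i * Q_coords c m (c' i) k)"
      using qb_sum[OF B1 _ _ _ k, of "{..<m'}" c' "B l"] c'K cK[OF l] cexp[OF l] by auto
    moreover have "Q_coords c m (c l) k = (if l = k then 1 else 0)"
    proof (rule qb_unique[OF B1 cK[OF l] _ k])
      have "(\<Sum>j<m. of_rat (if l = j then 1 else 0) * c j) = (\<Sum>j<m. if l = j then c j else 0)"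
        by (rule sum.cong) auto
      then show "c l = (\<Sum>j<m. of_rat (if l = j then 1 else 0) * c j)" using l by simp
    qed
    ultimately show ?thesis unfolding A_def by simp
  qed
  have trm: "Q_coords c' m' (x * c' i) i = (\<Sum>k<m. A i k * (\<Sum>l<m. M k l * B l i))" if i: "i < m'" for i
  proof -
    have e1: "x * c' i = (\<Sum>k<m. of_rat (A i k) * (x * c k))"
      using c'exp[OF i] by (simp add: sum_distrib_left algebra_simps)
    have "Q_coords c' m' (x * c' i) i = (\<Sum>k<m. A i k * Q_coords c' m' (x * c k) i)"
      unfolding e1 using qb_sum[OF B2 _ _ _ i, of "{..<m}" "\<lambda>k. x * c k" "A i"]
        mulK[OF x] cK mulK[OF x c'K[OF i]] e1 by auto
    also have "\<dots> = (\<Sum>k<m. A i k * (\<Sum>l<m. M k l * B l i))"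
    proof (rule sum.cong)
      fix k assume k: "k \<in> {..<m}"
      have "Q_coords c' m' (x * c k) i = (\<Sum>l<m. M k l * Q_coords c' m' (c l) i)"
        using qb_sum[OF B2 _ _ _ i, of "{..<m}" c "M k"] cK xcexp k mulK[OF x cK] by auto
      then show "A i k * Q_coords c' m' (x * c k) i = A i k * (\<Sum>l<m. M k l * B l i)"
        unfolding B_def by simp
    qed simp
    finally show ?thesis .
  qed
  have "(\<Sum>i<m'. Q_coords c' m' (x * c' i) i) = (\<Sum>i<m'. \<Sum>k<m. \<Sum>l<m. M k l * (B l i * A i k))"
    using trm by (simp add: sum_distrib_left algebra_simps)
  also have "\<dots> = (\<Sum>k<m. \<Sum>i<m'. \<Sum>l<m. M k l * (B l i * A i k))" by (rule sum.swap)
  also have "\<dots> = (\<Sum>k<m. \<Sum>l<m. \<Sum>i<m'. M k l * (B l i * A i k))"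
    by (rule sum.cong[OF refl], rule sum.swap)
  also have "\<dots> = (\<Sum>k<m. \<Sum>l<m. M k l * (\<Sum>i<m'. B l i * A i k))"
    by (simp add: sum_distrib_left)
  also have "\<dots> = (\<Sum>k<m. \<Sum>l<m. M k l * (if l = k then 1 else 0))"
    using BA by (intro sum.cong) auto
  also have "\<dots> = (\<Sum>k<m. M k k)" by (simp add: if_distrib cong: if_cong)
  finally show ?thesis unfolding M_def .
qed

lemma common_denom:
  fixes q :: "nat \<Rightarrow> rat"
  shows "\<exists>d::int. d > 0 \<and> (\<forall>i<m. of_int d * q i \<in> \<int>)"
proof (induction m)
  case 0 then show ?case by (intro exI[of _ 1]) auto
next
  case (Suc m)
  then obtain d where d: "d > 0" "\<forall>i<m. of_int d * q i \<in> \<int>" by blast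
  obtain a e where ae: "quotient_of (q m) = (a, e)" by (cases "quotient_of (q m)")
  have e: "e > 0" using quotient_of_denom_pos[OF ae] .
  have qm: "q m = of_int a / of_int e" using quotient_of_div[OF ae] .
  show ?case
  proof (intro exI[of _ "d * e"] conjI allI impI)
    show "d * e > 0" using d e by simp
    fix i assume "i < Suc m"
    then consider "i < m" | "i = m" by linarith
    then show "of_int (d * e) * q i \<in> \<int>"
    proof cases
      case 1
      then have "of_int d * q i \<in> \<int>" using d by blast
      moreover have "of_int (d * e) * q i = of_int e * (of_int d * q i)" by (simp add: mult_ac)
      ultimately show ?thesis by (metis Ints_mult Ints_of_int)
    next
      case 2
      have "of_int (d * e) * q m = of_int (d * a)" using e unfolding qm by simp
      then show ?thesis using 2 by (metis Ints_of_int)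
    qed
  qed
qed

locale ordctx =
  fixes R :: "'a::field_char_0 set" and n :: nat and b :: "nat \<Rightarrow> 'a"
  assumes one: "1 \<in> R"
    and clos: "\<forall>x\<in>R. \<forall>y\<in>R. x + y \<in> R \<and> - x \<in> R \<and> x * y \<in> R"
    and Rdef: "R = {\<Sum>i<n. of_int (c i) * b i | c. True}"
    and indep: "\<forall>c. (\<Sum>i<n. of_int (c i) * b i) = 0 \<longrightarrow> (\<forall>i<n. c i = 0)"
begin

lemma addR: "x \<in> R \<Longrightarrow> y \<in> R \<Longrightarrow> x + y \<in> R" using clos by blast
lemma negR: "x \<in> R \<Longrightarrow> - x \<in> R" using clos by blast
lemma mulR: "x \<in> R \<Longrightarrow> y \<in> R \<Longrightarrow> x * y \<in> R" using clos by blast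
lemma zeroR: "0 \<in> R" using addR[OF one negR[OF one]] by simp
lemma diffR: "x \<in> R \<Longrightarrow> y \<in> R \<Longrightarrow> x - y \<in> R" using addR[OF _ negR] by (metis diff_conv_add_uminus)

lemma natmulR: "x \<in> R \<Longrightarrow> of_nat k * x \<in> R"
  by (induction k) (auto simp: zeroR distrib_right intro: addR)

lemma intmulR: assumes "x \<in> R" shows "of_int z * x \<in> R"
proof (cases "z \<ge> 0")
  case True
  then have "(of_int z :: 'a) = of_nat (nat z)" by simp
  then show ?thesis using natmulR[OF assms] by metis
next
  case False
  then have "(of_int z :: 'a) = - of_nat (nat (- z))" by simp
  then have "of_int z * x = - (of_nat (nat (- z)) * x)" by simp
  then show ?thesis using negR[OF natmulR[OF assms]] by metis
qed

lemma of_intR: "of_int z \<in> R" using intmulR[OF one] by simp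

lemma sumR: "finite A \<Longrightarrow> (\<And>i. i \<in> A \<Longrightarrow> f i \<in> R) \<Longrightarrow> sum f A \<in> R"
  by (induction A rule: finite_induct) (auto simp: zeroR intro: addR)

lemma Rrep_in: "(\<Sum>i<n. of_int (z i) * b i) \<in> R"
  by (subst Rdef) blast

lemma bR: "i < n \<Longrightarrow> b i \<in> R"
proof -
  assume i: "i < n"
  have "b i = (\<Sum>j<n. of_int (if j = i then 1 else 0) * b j)"
  proof -
    have "(\<Sum>j<n. of_int (if j = i then 1 else 0) * b j) = (\<Sum>j<n. if j = i then b j else 0)"
      by (rule sum.cong) auto
    then show ?thesis using i by simp
  qed
  then show ?thesis using Rrep_in[of "\<lambda>j. if j = i then 1 else 0"] by simp
qed

lemma Rrep: "x \<in> R \<Longrightarrow> \<exists>z. x = (\<Sum>i<n. of_int (z i) * b i)"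
  using Rdef by blast

definition Qs :: "'a set" where "Qs = {x. \<exists>d::int. d \<noteq> 0 \<and> of_int d * x \<in> R}"

lemma R_Qs: "x \<in> R \<Longrightarrow> x \<in> Qs" unfolding Qs_def by (intro CollectI exI[of _ 1]) auto

lemma Qs_add: assumes "x \<in> Qs" "y \<in> Qs" shows "x + y \<in> Qs"
proof -
  from assms obtain d e where d: "d \<noteq> 0" "of_int d * x \<in> R" and e: "e \<noteq> 0" "of_int e * y \<in> R"
    unfolding Qs_def by blast
  have "of_int (d * e) * (x + y) = of_int e * (of_int d * x) + of_int d * (of_int e * y)"
    by (simp add: algebra_simps)
  also have "\<dots> \<in> R" by (rule addR[OF intmulR[OF d(2)] intmulR[OF e(2)]])
  finally show ?thesis unfolding Qs_def using d e by (intro CollectI exI[of _ "d * e"]) simp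
qed

lemma Qs_mul: assumes "x \<in> Qs" "y \<in> Qs" shows "x * y \<in> Qs"
proof -
  from assms obtain d e where d: "d \<noteq> 0" "of_int d * x \<in> R" and e: "e \<noteq> 0" "of_int e * y \<in> R"
    unfolding Qs_def by blast
  have "of_int (d * e) * (x * y) = (of_int d * x) * (of_int e * y)"
    by (simp add: algebra_simps)
  also have "\<dots> \<in> R" by (rule mulR[OF d(2) e(2)])
  finally show ?thesis unfolding Qs_def using d e by (intro CollectI exI[of _ "d * e"]) simp
qed

lemma Qs_neg: assumes "x \<in> Qs" shows "- x \<in> Qs"
proof -
  from assms obtain d where d: "d \<noteq> 0" "of_int d * x \<in> R" unfolding Qs_def by blast
  have "of_int d * (- x) = - (of_int d * x)" by simp
  then show ?thesis unfolding Qs_def using d negR by auto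
qed

lemma Qs_rat: assumes "x \<in> Qs" shows "of_rat r * x \<in> Qs"
proof -
  from assms obtain d where d: "d \<noteq> 0" "of_int d * x \<in> R" unfolding Qs_def by blast
  obtain a e where ae: "quotient_of r = (a, e)" by (cases "quotient_of r")
  have e: "e > 0" using quotient_of_denom_pos[OF ae] .
  have r: "r = of_int a / of_int e" using quotient_of_div[OF ae] .
  have "of_int (e * d) * (of_rat r * x) = of_int a * (of_int d * x)"
    using e unfolding r by (simp add: of_rat_divide field_simps)
  also have "\<dots> \<in> R" by (rule intmulR[OF d(2)])
  finally show ?thesis unfolding Qs_def using d e by (intro CollectI exI[of _ "e * d"]) simp
qed

lemma Qs_sum: "finite A \<Longrightarrow> (\<And>i. i \<in> A \<Longrightarrow> f i \<in> Qs) \<Longrightarrow> sum f A \<in> Qs"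
  by (induction A rule: finite_induct) (auto simp: R_Qs zeroR intro: Qs_add)

lemma bQs: "i < n \<Longrightarrow> b i \<in> Qs" using bR R_Qs by blast

lemma Qs_rep_in: "(\<Sum>i<n. of_rat (q i) * b i) \<in> Qs"
  by (intro Qs_sum Qs_rat bQs) auto

lemma Qrep: assumes "x \<in> Qs" shows "\<exists>q. x = (\<Sum>i<n. of_rat (q i) * b i)"
proof -
  from assms obtain d where d: "d \<noteq> 0" "of_int d * x \<in> R" unfolding Qs_def by blast
  then obtain z where z: "of_int d * x = (\<Sum>i<n. of_int (z i) * b i)" using Rrep by blast
  have "x = (\<Sum>i<n. of_int (z i) * b i) / of_int d" using z d(1) by (simp add: field_simps)
  also have "\<dots> = (\<Sum>i<n. of_rat (of_int (z i) / of_int d) * b i)"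
    by (simp add: sum_divide_distrib of_rat_divide)
  finally have xe: "x = (\<Sum>i<n. of_rat (of_int (z i) / of_int d) * b i)" .
  show ?thesis by (rule exI[of _ "\<lambda>i. rat_of_int (z i) / rat_of_int d"], rule xe)
qed

lemma Qindep: assumes "(\<Sum>i<n. of_rat (q i) * b i) = 0" shows "\<forall>i<n. q i = 0"
proof -
  obtain d where d: "d > 0" "\<forall>i<n. of_int d * q i \<in> \<int>" using common_denom by blast
  have "\<forall>i<n. \<exists>z. of_int d * q i = of_int z" using d(2) Ints_cases by metis
  then obtain z where z: "\<forall>i<n. of_int d * q i = of_int (z i)" by metis
  have "(\<Sum>i<n. of_int (z i) * b i) = (\<Sum>i<n. of_int d * (of_rat (q i) * b i))"
  proof (rule sum.cong)
    fix i assume "i \<in> {..<n}"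
    then have "of_int (z i) = (of_rat (of_int d * q i) :: 'a)" using z by simp
    then show "of_int (z i) * b i = of_int d * (of_rat (q i) * b i)" by (simp add: of_rat_mult)
  qed simp
  also have "\<dots> = 0" using assms by (simp add: sum_distrib_left[symmetric])
  finally have "\<forall>i<n. z i = 0" using indep by blast
  then show ?thesis using z d(1) by simp
qed

lemma basis: "is_Q_basis Qs b n"
  unfolding is_Q_basis_def
proof (intro conjI ballI allI impI)
  fix i assume "i < n" then show "b i \<in> Qs" by (rule bQs)
next
  fix x assume x: "x \<in> Qs"
  obtain q where q: "x = (\<Sum>i<n. of_rat (q i) * b i)" using Qrep[OF x] by blast
  define q' where "q' j = (if j < n then q j else 0)" for j
  have 1: "(\<forall>j\<ge>n. q' j = 0) \<and> x = (\<Sum>j<n. of_rat (q' j) * b j)" unfolding q'_def q by simp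
  show "\<exists>!c::nat\<Rightarrow>rat. (\<forall>j\<ge>n. c j = 0) \<and> x = (\<Sum>j<n. of_rat (c j) * b j)"
  proof (rule ex1I[of _ q'])
    show "(\<forall>j\<ge>n. q' j = 0) \<and> x = (\<Sum>j<n. of_rat (q' j) * b j)" by (rule 1)
  next
    fix c assume c: "(\<forall>j\<ge>n. c j = 0) \<and> x = (\<Sum>j<n. of_rat (c j) * b j)"
    have "(\<Sum>j<n. of_rat (c j - q' j) * b j) = 0"
      using c 1 by (simp add: of_rat_diff algebra_simps sum_subtractf)
    then have "\<forall>j<n. c j - q' j = 0" by (rule Qindep)
    then show "c = q'" using c 1 by (intro ext) (metis eq_iff_diff_eq_0 not_le)
  qed
qed

abbreviation qc where "qc x l \<equiv> Q_coords b n x l"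

lemma qc_exp: assumes "x \<in> Qs" shows "x = (\<Sum>l<n. of_rat (qc x l) * b l)"
  using qb_coords[OF basis assms] by (rule conjunct2)

lemma qc_unique: assumes h: "x = (\<Sum>j<n. of_rat (q j) * b j)" and j: "j < n" shows "qc x j = q j"
proof -
  have xQ: "x \<in> Qs" unfolding h by (rule Qs_rep_in)
  show ?thesis by (rule qb_unique[OF basis xQ h j])
qed

lemma qc_add: assumes "x \<in> Qs" "y \<in> Qs" "j < n" shows "qc (x + y) j = qc x j + qc y j"
proof -
  have "(\<Sum>l<n. of_rat (qc x l + qc y l) * b l) = (\<Sum>l<n. of_rat (qc x l) * b l) + (\<Sum>l<n. of_rat (qc y l) * b l)"
    by (simp add: of_rat_add distrib_right sum.distrib)
  also have "\<dots> = x + y" by (simp only: qc_exp[OF assms(1), symmetric] qc_exp[OF assms(2), symmetric])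
  finally have "x + y = (\<Sum>l<n. of_rat (qc x l + qc y l) * b l)" by simp
  then show ?thesis by (rule qc_unique[OF _ assms(3)])
qed

lemma qc_rat: assumes "x \<in> Qs" "j < n" shows "qc (of_rat r * x) j = r * qc x j"
proof -
  have "(\<Sum>l<n. of_rat (r * qc x l) * b l) = of_rat r * (\<Sum>l<n. of_rat (qc x l) * b l)"
    by (simp add: of_rat_mult sum_distrib_left mult.assoc)
  also have "\<dots> = of_rat r * x" by (simp only: qc_exp[OF assms(1), symmetric])
  finally have "of_rat r * x = (\<Sum>l<n. of_rat (r * qc x l) * b l)" by simp
  then show ?thesis by (rule qc_unique[OF _ assms(2)])
qed

lemma qc_R: assumes "x \<in> R" "j < n" shows "qc x j \<in> \<int>"
proof -
  obtain z where z: "x = (\<Sum>i<n. of_int (z i) * b i)" using Rrep[OF assms(1)] by blast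
  then have "x = (\<Sum>i<n. of_rat (of_int (z i)) * b i)" by simp
  then have "qc x j = of_int (z j)" by (rule qc_unique[OF _ assms(2)])
  then show ?thesis by simp
qed

lemma Qs_intR: assumes "x \<in> Qs" "\<forall>j<n. qc x j \<in> \<int>" shows "x \<in> R"
proof -
  have "\<forall>j<n. \<exists>z. qc x j = of_int z" using assms(2) Ints_cases by metis
  then obtain z where z: "\<forall>j<n. qc x j = of_int (z j)" by metis
  have "x = (\<Sum>l<n. of_rat (qc x l) * b l)" by (rule qc_exp[OF assms(1)])
  also have "\<dots> = (\<Sum>l<n. of_int (z l) * b l)" using z by (intro sum.cong) auto
  finally show ?thesis using Rrep_in by simp
qed

lemma mult_expand:
  assumes y: "y \<in> Qs"
  shows "y * (\<Sum>k<n. of_rat (c k) * b k) = (\<Sum>l<n. of_rat (\<Sum>k<n. c k * qc (y * b k) l) * b l)"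
proof -
  have "y * (\<Sum>k<n. of_rat (c k) * b k) = (\<Sum>k<n. of_rat (c k) * (y * b k))"
    by (simp add: sum_distrib_left algebra_simps)
  also have "\<dots> = (\<Sum>k<n. of_rat (c k) * (\<Sum>l<n. of_rat (qc (y * b k) l) * b l))"
  proof (rule sum.cong[OF refl])
    fix k assume "k \<in> {..<n}"
    then have k: "k < n" by simp
    show "of_rat (c k) * (y * b k) = of_rat (c k) * (\<Sum>l<n. of_rat (qc (y * b k) l) * b l)"
      by (rule arg_cong[where f="\<lambda>z. of_rat (c k) * z"], rule qc_exp[OF Qs_mul[OF y bQs[OF k]]])
  qed
  also have "\<dots> = (\<Sum>k<n. \<Sum>l<n. of_rat (c k * qc (y * b k) l) * b l)"
    by (simp add: sum_distrib_left of_rat_mult mult.assoc)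
  also have "\<dots> = (\<Sum>l<n. \<Sum>k<n. of_rat (c k * qc (y * b k) l) * b l)" by (rule sum.swap)
  also have "\<dots> = (\<Sum>l<n. of_rat (\<Sum>k<n. c k * qc (y * b k) l) * b l)"
    by (simp add: of_rat_sum sum_distrib_right)
  finally show ?thesis .
qed

lemma inverse_Qs: assumes y: "y \<in> R" "y \<noteq> 0" shows "inverse y \<in> Qs"
proof -
  define A where "A k l = qc (y * b k) l" for k l
  have yQ: "y \<in> Qs" using R_Qs y(1) .
  have inj: "\<forall>k<n. c k = 0" if h: "\<forall>l<n. (\<Sum>k<n. c k * A k l) = 0" for c
  proof -
    have "y * (\<Sum>k<n. of_rat (c k) * b k) = (\<Sum>l<n. of_rat (\<Sum>k<n. c k * A k l) * b l)"
      unfolding A_def by (rule mult_expand[OF yQ])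
    also have "\<dots> = 0" using h by simp
    finally have "(\<Sum>k<n. of_rat (c k) * b k) = 0" using y(2) by simp
    then show ?thesis by (rule Qindep)
  qed
  obtain H where H: "\<forall>e l. l < n \<longrightarrow> (\<Sum>k<n. (\<Sum>l'<n. H k l' * e l') * A k l) = e l"
    using lin_solve[of n A] inj by blast
  define c where "c k = (\<Sum>l'<n. H k l' * qc 1 l')" for k
  have "y * (\<Sum>k<n. of_rat (c k) * b k) = (\<Sum>l<n. of_rat (\<Sum>k<n. c k * A k l) * b l)"
    unfolding A_def by (rule mult_expand[OF yQ])
  also have "\<dots> = (\<Sum>l<n. of_rat (qc 1 l) * b l)"
    using H unfolding c_def by (intro sum.cong) auto
  also have "\<dots> = 1" by (rule qc_exp[OF R_Qs[OF one], symmetric])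
  finally have "inverse y = (\<Sum>k<n. of_rat (c k) * b k)" using y(2) by (simp add: field_simps)
  then show ?thesis using Qs_rep_in by simp
qed

lemma K_eq: "frac_field R = Qs"
proof
  show "frac_field R \<subseteq> Qs"
  proof
    fix z assume "z \<in> frac_field R"
    then obtain x y where xy: "z = x / y" "x \<in> R" "y \<in> R" "y \<noteq> 0" unfolding frac_field_def by blast
    have "z = x * inverse y" using xy by (simp add: divide_inverse)
    then show "z \<in> Qs" using Qs_mul[OF R_Qs[OF xy(2)] inverse_Qs[OF xy(3,4)]] by simp
  qed
next
  show "Qs \<subseteq> frac_field R"
  proof
    fix x assume "x \<in> Qs"
    then obtain d where d: "d \<noteq> 0" "of_int d * x \<in> R" unfolding Qs_def by blast
    have "x = (of_int d * x) / of_int d" using d(1) by simp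
    then show "x \<in> frac_field R" unfolding frac_field_def using d of_intR by fastforce
  qed
qed

lemma Qs_inverse: assumes "x \<in> Qs" shows "inverse x \<in> Qs"
proof -
  from assms have "x \<in> frac_field R" using K_eq by simp
  then obtain u v where uv: "x = u / v" "u \<in> R" "v \<in> R" "v \<noteq> 0" unfolding frac_field_def by blast
  show ?thesis
  proof (cases "u = 0")
    case True then show ?thesis using uv R_Qs zeroR by simp
  next
    case False
    have "inverse x = v / u" using uv by simp
    moreover have "v / u \<in> frac_field R" unfolding frac_field_def using uv False by blast
    ultimately show ?thesis using K_eq by simp
  qed
qed

definition Tr where "Tr x = field_trace (frac_field R) x"

lemma Tr_formula: assumes x: "x \<in> Qs" shows "Tr x = (\<Sum>k<n. qc (x * b k) k)"
proof -
  define P where "P = (SOME (c, m). is_Q_basis Qs c m)"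
  obtain c m where Pcm: "P = (c, m)" by (cases P)
  have "\<exists>cm. (case cm of (c, m) \<Rightarrow> is_Q_basis Qs c m)" using basis by auto
  then have "case P of (c, m) \<Rightarrow> is_Q_basis Qs c m" unfolding P_def by (rule someI_ex)
  then have B: "is_Q_basis Qs c m" using Pcm by simp
  have "Tr x = (\<Sum>i<m. Q_coords c m (x * c i) i)"
    unfolding Tr_def field_trace_def K_eq P_def[symmetric] Pcm by simp
  also have "\<dots> = (\<Sum>k<n. qc (x * b k) k)"
    by (rule trace_basis_indep[OF basis B x Qs_mul])
  finally show ?thesis .
qed

lemma Tr_add: assumes x: "x \<in> Qs" and y: "y \<in> Qs" shows "Tr (x + y) = Tr x + Tr y"
proof -
  have "Tr (x + y) = (\<Sum>k<n. qc ((x + y) * b k) k)" by (rule Tr_formula[OF Qs_add[OF x y]])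
  also have "\<dots> = (\<Sum>k<n. qc (x * b k) k + qc (y * b k) k)"
  proof (rule sum.cong[OF refl])
    fix k assume k: "k \<in> {..<n}"
    have "(x + y) * b k = x * b k + y * b k" by (simp add: distrib_right)
    then show "qc ((x + y) * b k) k = qc (x * b k) k + qc (y * b k) k"
      using qc_add[OF Qs_mul[OF x bQs] Qs_mul[OF y bQs]] k by simp
  qed
  also have "\<dots> = Tr x + Tr y" by (simp only: sum.distrib Tr_formula[OF x] Tr_formula[OF y])
  finally show ?thesis .
qed

lemma Tr_rat: assumes x: "x \<in> Qs" shows "Tr (of_rat r * x) = r * Tr x"
proof -
  have "Tr (of_rat r * x) = (\<Sum>k<n. qc (of_rat r * x * b k) k)" by (rule Tr_formula[OF Qs_rat[OF x]])
  also have "\<dots> = (\<Sum>k<n. r * qc (x * b k) k)"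
  proof (rule sum.cong[OF refl])
    fix k assume k: "k \<in> {..<n}"
    have kn: "k < n" using k by simp
    show "qc (of_rat r * x * b k) k = r * qc (x * b k) k"
      unfolding mult.assoc[of "of_rat r"] by (rule qc_rat[OF Qs_mul[OF x bQs[OF kn]] kn])
  qed
  also have "\<dots> = r * Tr x" by (simp only: sum_distrib_left[symmetric] Tr_formula[OF x])
  finally show ?thesis .
qed

lemma Tr_one: "Tr 1 = of_nat n"
proof -
  have "qc (b k) k = 1" if "k < n" for k
  proof -
    have "(\<Sum>j<n. of_rat (if k = j then 1 else 0) * b j) = (\<Sum>j<n. if k = j then b j else 0)"
      by (rule sum.cong) auto
    then have "b k = (\<Sum>j<n. of_rat (if k = j then 1 else 0) * b j)" using that by simp
    from qc_unique[OF this that] show ?thesis by simp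
  qed
  then show ?thesis using Tr_formula[OF R_Qs[OF one]] by simp
qed

lemma Tr_R: assumes "x \<in> R" shows "Tr x \<in> \<int>"
proof -
  have "(\<Sum>k<n. qc (x * b k) k) \<in> \<int>"
    by (rule Ints_sum) (use qc_R mulR[OF assms bR] in auto)
  then show ?thesis using Tr_formula[OF R_Qs[OF assms]] by simp
qed

end

definition zp :: "nat \<Rightarrow> rat \<Rightarrow> bool" where
  "zp p q \<longleftrightarrow> (\<exists>z s. q = of_int z / of_int s \<and> \<not> int p dvd s)"
definition pzp :: "nat \<Rightarrow> rat \<Rightarrow> bool" where
  "pzp p q \<longleftrightarrow> (\<exists>z s. q = of_int (int p * z) / of_int s \<and> \<not> int p dvd s)"

context fixes p :: nat assumes pr: "prime p"
begin

lemma pr_int: "prime (int p)" using pr by simp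

lemma ndvd_nz: "\<not> int p dvd s \<Longrightarrow> s \<noteq> 0" by auto

lemma ndvd_mult: "\<not> int p dvd s \<Longrightarrow> \<not> int p dvd t \<Longrightarrow> \<not> int p dvd (s * t)"
  using pr_int prime_dvd_mult_iff by blast

lemma zp_of_int: "zp p (of_int z)"
  unfolding zp_def using pr by (intro exI[of _ z] exI[of _ 1]) (auto simp: prime_gt_1_nat)

lemma zp_mult: assumes "zp p x" "zp p y" shows "zp p (x * y)"
proof -
  from assms obtain z s w t where x: "x = of_int z / of_int s" "\<not> int p dvd s"
    and y: "y = of_int w / of_int t" "\<not> int p dvd t" unfolding zp_def by blast
  have "x * y = of_int (z * w) / of_int (s * t)" using x y by simp
  then show ?thesis unfolding zp_def using ndvd_mult[OF x(2) y(2)] by blast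
qed

lemma zp_add: assumes "zp p x" "zp p y" shows "zp p (x + y)"
proof -
  from assms obtain z s w t where x: "x = of_int z / of_int s" "\<not> int p dvd s"
    and y: "y = of_int w / of_int t" "\<not> int p dvd t" unfolding zp_def by blast
  have "x + y = of_int (z * t + w * s) / of_int (s * t)"
    using x y ndvd_nz[OF x(2)] ndvd_nz[OF y(2)] by (simp add: field_simps)
  then show ?thesis unfolding zp_def using ndvd_mult[OF x(2) y(2)] by blast
qed

lemma pzp_zp: assumes "pzp p x" "zp p y" shows "pzp p (x * y)"
proof -
  from assms obtain z s w t where x: "x = of_int (int p * z) / of_int s" "\<not> int p dvd s"
    and y: "y = of_int w / of_int t" "\<not> int p dvd t" unfolding zp_def pzp_def by blast
  have "x * y = of_int (int p * (z * w)) / of_int (s * t)" using x y by simp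
  then show ?thesis unfolding pzp_def using ndvd_mult[OF x(2) y(2)] by blast
qed

lemma pzp_add: assumes "pzp p x" "pzp p y" shows "pzp p (x + y)"
proof -
  from assms obtain z s w t where x: "x = of_int (int p * z) / of_int s" "\<not> int p dvd s"
    and y: "y = of_int (int p * w) / of_int t" "\<not> int p dvd t" unfolding pzp_def by blast
  have "x + y = of_int (int p * (z * t + w * s)) / of_int (s * t)"
    using x y ndvd_nz[OF x(2)] ndvd_nz[OF y(2)] by (simp add: field_simps)
  then show ?thesis unfolding pzp_def using ndvd_mult[OF x(2) y(2)] by blast
qed

lemma pzp_zero: "pzp p 0"
  unfolding pzp_def using pr by (intro exI[of _ 0] exI[of _ 1]) (auto simp: prime_gt_1_nat)

lemma pzp_sum: "finite A \<Longrightarrow> (\<And>i. i \<in> A \<Longrightarrow> pzp p (f i)) \<Longrightarrow> pzp p (sum f A)"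
  by (induction A rule: finite_induct) (auto simp: pzp_zero intro: pzp_add)

lemma zp_div: assumes "zp p x" "\<not> p dvd s" shows "zp p (x / of_nat s)"
proof -
  have "zp p (1 / of_nat s)" unfolding zp_def using assms(2)
    by (intro exI[of _ 1] exI[of _ "int s"]) (auto simp: int_dvd_int_iff)
  from zp_mult[OF assms(1) this] show ?thesis by simp
qed

lemma pzp_int_mult: "pzp p x \<Longrightarrow> pzp p (of_int z * x)"
  using pzp_zp[OF _ zp_of_int] by (simp add: mult.commute)

lemma pzp_Int: assumes "pzp p (of_int z)" shows "int p dvd z"
proof -
  from assms obtain w s where h: "of_int z = (of_int (int p * w) / of_int s :: rat)" "\<not> int p dvd s"
    unfolding pzp_def by blast
  have "of_int (z * s) = (of_int (int p * w) :: rat)" using h ndvd_nz[OF h(2)] by (simp add: field_simps)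
  then have "z * s = int p * w" by (simp only: of_int_eq_iff)
  then have "int p dvd z * s" by simp
  then show ?thesis using h(2) pr_int prime_dvd_mult_iff by blast
qed

lemma pzp_ratio:
  fixes d a :: nat
  assumes "a > 0" "multiplicity p a < multiplicity p d"
  shows "pzp p (of_nat d / of_nat a)"
proof -
  have d0: "d \<noteq> 0" using assms(2) by (metis multiplicity_zero not_less_zero)
  have nu: "\<not> is_unit p" using pr not_prime_unit by blast
  obtain u where a: "a = p ^ multiplicity p a * u" "\<not> p dvd u"
    using multiplicity_decompose'[of a p] assms(1) nu by auto
  obtain v where d: "d = p ^ multiplicity p d * v"
    using multiplicity_decompose'[of d p] d0 nu by auto
  define k where "k = multiplicity p a"
  define e where "e = multiplicity p d"
  have ek: "e = k + Suc (e - k - 1)" using assms(2) unfolding k_def e_def by simp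
  have "(of_nat d / of_nat a :: rat) = of_nat (p ^ e * v) / of_nat (p ^ k * u)"
    using a d unfolding k_def e_def by simp
  also have "\<dots> = of_nat (p ^ k * (p * (p ^ (e - k - 1) * v))) / of_nat (p ^ k * u)"
    by (subst ek) (simp add: power_add mult_ac)
  also have "\<dots> = of_int (int p * int (p ^ (e - k - 1) * v)) / of_int (int u)"
    using pr by (simp add: prime_gt_0_nat)
  finally show ?thesis unfolding pzp_def using a(2) by (metis int_dvd_int_iff)
qed

end

locale ordp = ordctx R n b for R :: "'a::field_char_0 set" and n b +
  fixes p :: nat assumes pr: "prime p"
begin

definition S where "S = loc_at p R"

lemma S_iff: "x \<in> S \<longleftrightarrow> (\<exists>r s. x = r / of_nat s \<and> r \<in> R \<and> \<not> p dvd s)"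
  unfolding S_def loc_at_def by blast

lemma ndvd0: "\<not> p dvd s \<Longrightarrow> s \<noteq> 0" by (metis dvd_0_right)

lemma R_S: "x \<in> R \<Longrightarrow> x \<in> S"
  unfolding S_iff using pr by (intro exI[of _ x] exI[of _ 1]) (auto simp: prime_gt_1_nat)

lemma S_add: assumes "x \<in> S" "y \<in> S" shows "x + y \<in> S"
proof -
  from assms obtain r s r' s' where x: "x = r / of_nat s" "r \<in> R" "\<not> p dvd s"
    and y: "y = r' / of_nat s'" "r' \<in> R" "\<not> p dvd s'" unfolding S_iff by blast
  have "x + y = (of_nat s' * r + of_nat s * r') / of_nat (s * s')"
    using x y ndvd0[OF x(3)] ndvd0[OF y(3)] by (simp add: field_simps)
  moreover have "of_nat s' * r + of_nat s * r' \<in> R" using x y by (intro addR natmulR)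
  moreover have "\<not> p dvd s * s'" using x(3) y(3) pr prime_dvd_mult_iff by blast
  ultimately show ?thesis unfolding S_iff by blast
qed

lemma S_mul: assumes "x \<in> S" "y \<in> S" shows "x * y \<in> S"
proof -
  from assms obtain r s r' s' where x: "x = r / of_nat s" "r \<in> R" "\<not> p dvd s"
    and y: "y = r' / of_nat s'" "r' \<in> R" "\<not> p dvd s'" unfolding S_iff by blast
  have "x * y = (r * r') / of_nat (s * s')" using x y by simp
  moreover have "r * r' \<in> R" using x y by (intro mulR)
  moreover have "\<not> p dvd s * s'" using x(3) y(3) pr prime_dvd_mult_iff by blast
  ultimately show ?thesis unfolding S_iff by blast
qed

lemma S_neg: assumes "x \<in> S" shows "- x \<in> S"
proof -
  from assms obtain r s where x: "x = r / of_nat s" "r \<in> R" "\<not> p dvd s" unfolding S_iff by blast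
  have "- x = (- r) / of_nat s" using x by simp
  then show ?thesis unfolding S_iff using x negR by blast
qed

lemma S_diff: "x \<in> S \<Longrightarrow> y \<in> S \<Longrightarrow> x - y \<in> S"
  using S_add[OF _ S_neg] by (metis diff_conv_add_uminus)

lemma S_div: assumes "x \<in> S" "\<not> p dvd t" shows "x / of_nat t \<in> S"
proof -
  from assms obtain r s where x: "x = r / of_nat s" "r \<in> R" "\<not> p dvd s" unfolding S_iff by blast
  have "x / of_nat t = r / of_nat (s * t)" using x by simp
  moreover have "\<not> p dvd s * t" using x(3) assms(2) pr prime_dvd_mult_iff by blast
  ultimately show ?thesis unfolding S_iff using x by blast
qed

lemma one_S: "1 \<in> S" using R_S one by blast
lemma zero_S: "0 \<in> S" using R_S zeroR by blast

lemma S_pow: "x \<in> S \<Longrightarrow> x ^ k \<in> S"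
  by (induction k) (auto simp: one_S S_mul)

lemma S_sum: "finite A \<Longrightarrow> (\<And>i. i \<in> A \<Longrightarrow> f i \<in> S) \<Longrightarrow> sum f A \<in> S"
  by (induction A rule: finite_induct) (auto simp: zero_S intro: S_add)

lemma S_intmul: "x \<in> S \<Longrightarrow> of_int z * x \<in> S"
  using S_mul[OF R_S[OF of_intR]] by blast

lemma S_Qs: assumes "x \<in> S" shows "x \<in> Qs"
proof -
  from assms obtain r s where x: "x = r / of_nat s" "r \<in> R" "\<not> p dvd s" unfolding S_iff by blast
  have "x = of_rat (1 / of_nat s) * r" using x by (simp add: of_rat_divide)
  then show ?thesis using Qs_rat[OF R_Qs[OF x(2)]] by simp
qed

lemma Tr_div: assumes "x \<in> Qs" shows "Tr (x / of_nat s) = Tr x / of_nat s"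
proof -
  have "x / of_nat s = of_rat (1 / of_nat s) * x" by (simp add: of_rat_divide)
  then show ?thesis using Tr_rat[OF assms, of "1 / of_nat s"] by simp
qed

lemma Tr_intmul: assumes "x \<in> Qs" shows "Tr (of_int z * x) = of_int z * Tr x"
  using Tr_rat[OF assms, of "of_int z"] by simp

definition D where "D = trace_dual (frac_field R) R"

lemma D_iff: "x \<in> D \<longleftrightarrow> x \<in> Qs \<and> (\<forall>y\<in>R. Tr (x * y) \<in> \<int>)"
  unfolding D_def trace_dual_def Tr_def K_eq by auto

lemma D_S_zp: assumes x: "x \<in> D" and w: "w \<in> S" shows "zp p (Tr (x * w))"
proof -
  from w obtain r s where w': "w = r / of_nat s" "r \<in> R" "\<not> p dvd s" unfolding S_iff by blast
  have xQ: "x \<in> Qs" using x D_iff by blast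
  have "Tr (x * w) = Tr (x * r) / of_nat s"
    using Tr_div[OF Qs_mul[OF xQ R_Qs[OF w'(2)]]] w'(1) by (simp add: times_divide_eq_right)
  moreover have "Tr (x * r) \<in> \<int>" using x w'(2) D_iff by blast
  ultimately show ?thesis using zp_div[OF pr _ w'(3)] zp_of_int[OF pr] by (metis Ints_cases)
qed

definition Nn where "Nn = {v \<in> S. \<forall>w\<in>S. pzp p (Tr (v * w))}"

end

context ordp begin

lemma qc_neg: assumes "x \<in> Qs" "j < n" shows "qc (- x) j = - qc x j"
  using qc_rat[OF assms, of "-1"] by simp

lemma qc_diff: assumes "x \<in> Qs" "y \<in> Qs" "j < n" shows "qc (x - y) j = qc x j - qc y j"
  using qc_add[OF assms(1) Qs_neg[OF assms(2)] assms(3)] qc_neg[OF assms(2,3)] by simp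

definition zc where "zc x l = \<lfloor>qc x l\<rfloor>"

lemma zc_eq: assumes "x \<in> R" "l < n" shows "of_int (zc x l) = qc x l"
  unfolding zc_def using qc_R[OF assms] by (metis floor_of_int Ints_cases)

lemma zc_exp: assumes "x \<in> R" shows "x = (\<Sum>l<n. of_int (zc x l) * b l)"
proof -
  have "(\<Sum>l<n. of_int (zc x l) * b l) = (\<Sum>l<n. of_rat (qc x l) * b l)"
  proof (rule sum.cong[OF refl])
    fix l assume "l \<in> {..<n}"
    then have "of_int (zc x l) = qc x l" using zc_eq[OF assms] by simp
    then have "(of_int (zc x l) :: 'a) = of_rat (qc x l)" by (metis of_rat_of_int_eq)
    then show "of_int (zc x l) * b l = of_rat (qc x l) * b l" by simp
  qed
  also have "\<dots> = x" by (rule qc_exp[OF R_Qs[OF assms], symmetric])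
  finally show ?thesis by simp
qed

lemma zc_unique: assumes h: "x = (\<Sum>l<n. of_int (z l) * b l)" and l: "l < n" shows "zc x l = z l"
proof -
  have "x = (\<Sum>l<n. of_rat (of_int (z l)) * b l)" using h by simp
  then have "qc x l = of_int (z l)" by (rule qc_unique[OF _ l])
  then show ?thesis unfolding zc_def by simp
qed

lemma zc_diff: assumes "x \<in> R" "y \<in> R" "l < n" shows "zc (x - y) l = zc x l - zc y l"
proof -
  have "of_int (zc (x - y) l) = (of_int (zc x l - zc y l) :: rat)"
    using zc_eq[OF diffR[OF assms(1,2)] assms(3)] zc_eq[OF assms(1,3)] zc_eq[OF assms(2,3)]
      qc_diff[OF R_Qs[OF assms(1)] R_Qs[OF assms(2)] assms(3)] by simp
  then show ?thesis by (simp only: of_int_eq_iff)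
qed

definition pR where "pR = {of_nat p * y | y. y \<in> R}"

lemma pR_R: "x \<in> pR \<Longrightarrow> x \<in> R" unfolding pR_def using natmulR by blast

lemma pR_add: "x \<in> pR \<Longrightarrow> y \<in> pR \<Longrightarrow> x + y \<in> pR"
  unfolding pR_def by (auto simp: distrib_left[symmetric] intro!: addR)

lemma pR_mul: "x \<in> pR \<Longrightarrow> r \<in> R \<Longrightarrow> x * r \<in> pR"
  unfolding pR_def by (auto simp: mult.assoc intro!: mulR)

lemma pR_intmul: "x \<in> pR \<Longrightarrow> of_int z * x \<in> pR"
  using pR_mul[OF _ of_intR] by (metis mult.commute)

lemma pR_zero: "0 \<in> pR" unfolding pR_def using zeroR by force

lemma pR_sum: "finite A \<Longrightarrow> (\<And>i. i \<in> A \<Longrightarrow> f i \<in> pR) \<Longrightarrow> sum f A \<in> pR"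
  by (induction A rule: finite_induct) (auto simp: pR_zero intro: pR_add)

lemma pR_iff: assumes x: "x \<in> R" shows "x \<in> pR \<longleftrightarrow> (\<forall>l<n. int p dvd zc x l)"
proof
  assume "x \<in> pR"
  then obtain y where y: "x = of_nat p * y" "y \<in> R" unfolding pR_def by blast
  show "\<forall>l<n. int p dvd zc x l"
  proof (intro allI impI)
    fix l assume l: "l < n"
    have "x = of_nat p * (\<Sum>l<n. of_int (zc y l) * b l)"
      using y(1) arg_cong[OF zc_exp[OF y(2)], of "\<lambda>t. of_nat p * t"] by simp
    also have "\<dots> = (\<Sum>l<n. of_int (int p * zc y l) * b l)" by (simp add: sum_distrib_left mult.assoc)
    finally have "x = (\<Sum>l<n. of_int (int p * zc y l) * b l)" .
    then have "zc x l = int p * zc y l" by (rule zc_unique[OF _ l])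
    then show "int p dvd zc x l" by simp
  qed
next
  assume h: "\<forall>l<n. int p dvd zc x l"
  then have "\<forall>l<n. \<exists>w. zc x l = int p * w" by (auto simp: dvd_def)
  then obtain w where w: "\<forall>l<n. zc x l = int p * w l" by metis
  have "x = (\<Sum>l<n. of_int (zc x l) * b l)" by (rule zc_exp[OF x])
  also have "\<dots> = (\<Sum>l<n. of_nat p * (of_int (w l) * b l))"
    using w by (intro sum.cong) auto
  also have "\<dots> = of_nat p * (\<Sum>l<n. of_int (w l) * b l)" by (simp add: sum_distrib_left)
  finally show "x \<in> pR" unfolding pR_def using Rrep_in by blast
qed

lemma pigeon: assumes rho: "\<rho> \<in> R" shows "\<exists>r\<ge>1. \<rho> ^ (2 * r) - \<rho> ^ r \<in> pR"
proof -
  have pw: "\<rho> ^ k \<in> R" for k by (induction k) (auto simp: one intro: mulR rho)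
  define f where "f i = map (\<lambda>l. zc (\<rho> ^ i) l mod int p) [0..<n]" for i
  have "range f \<subseteq> {xs. set xs \<subseteq> {0..<int p} \<and> length xs = n}"
    using pr unfolding f_def by (auto simp: prime_gt_0_nat)
  moreover have "finite {xs. set xs \<subseteq> {0..<int p} \<and> length xs = n}"
    by (rule finite_lists_length_eq) simp
  ultimately have "finite (range f)" by (rule finite_subset)
  then have "\<not> inj f" using finite_imageD by blast
  then obtain i j where ij: "f i = f j" "i \<noteq> j" unfolding inj_def by blast
  obtain i j where ij: "f i = f j" "i < j"
    using ij by (metis linorder_neqE_nat)
  have dj: "\<rho> ^ j - \<rho> ^ i \<in> pR"
  proof -
    have "int p dvd zc (\<rho> ^ j - \<rho> ^ i) l" if l: "l < n" for l
    proof -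
      have "zc (\<rho> ^ i) l mod int p = zc (\<rho> ^ j) l mod int p"
        using arg_cong[OF ij(1), of "\<lambda>xs. xs ! l"] l unfolding f_def by simp
      then have "int p dvd zc (\<rho> ^ j) l - zc (\<rho> ^ i) l" by (metis mod_eq_dvd_iff)
      then show ?thesis using zc_diff[OF pw pw l] by simp
    qed
    then show ?thesis using pR_iff[OF diffR[OF pw pw]] by blast
  qed
  define L where "L = j - i"
  have per: "\<rho> ^ (i + q * L) - \<rho> ^ i \<in> pR" for q
  proof (induction q)
    case 0 then show ?case using pR_zero by simp
  next
    case (Suc q)
    have e: "i + Suc q * L = j + q * L" using ij(2) unfolding L_def by simp
    have e1: "\<rho> ^ (i + Suc q * L) = \<rho> ^ j * \<rho> ^ (q * L)" by (simp only: e power_add)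
    have e2: "\<rho> ^ (i + q * L) = \<rho> ^ i * \<rho> ^ (q * L)" by (simp only: power_add)
    have "\<rho> ^ (i + Suc q * L) - \<rho> ^ i = (\<rho> ^ j - \<rho> ^ i) * \<rho> ^ (q * L) + (\<rho> ^ (i + q * L) - \<rho> ^ i)"
      unfolding e1 e2 by (simp add: algebra_simps)
    moreover have "(\<rho> ^ j - \<rho> ^ i) * \<rho> ^ (q * L) + (\<rho> ^ (i + q * L) - \<rho> ^ i) \<in> pR"
      by (rule pR_add[OF pR_mul[OF dj pw] Suc])
    ultimately show ?case by (simp only:)
  qed
  define r where "r = L * (i + 1)"
  have L1: "L \<ge> 1" using ij(2) unfolding L_def by simp
  have ri: "r \<ge> i + 1" unfolding r_def using L1 mult_le_mono1[OF L1, of "i + 1"] by simp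
  have "\<rho> ^ (2 * r) - \<rho> ^ r = (\<rho> ^ (i + (i + 1) * L) - \<rho> ^ i) * \<rho> ^ (r - i)"
  proof -
    have ee: "i + (i + 1) * L + (r - i) = 2 * r" using ri unfolding r_def by (simp add: algebra_simps)
    have "\<rho> ^ (i + (i + 1) * L) * \<rho> ^ (r - i) = \<rho> ^ (2 * r)"
      by (simp only: power_add[symmetric] ee)
    moreover have "\<rho> ^ i * \<rho> ^ (r - i) = \<rho> ^ r"
      using ri by (simp add: power_add[symmetric])
    ultimately show ?thesis by (simp add: algebra_simps)
  qed
  moreover have "(\<rho> ^ (i + (i + 1) * L) - \<rho> ^ i) * \<rho> ^ (r - i) \<in> pR"
    by (rule pR_mul[OF per pw])
  ultimately have "\<rho> ^ (2 * r) - \<rho> ^ r \<in> pR" by (simp only:)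
  moreover have "r \<ge> 1" using ri by simp
  ultimately show ?thesis by blast
qed

end

context ordp begin

lemma Nn_S: "v \<in> Nn \<Longrightarrow> v \<in> S" unfolding Nn_def by blast

lemma Nn_mulS: assumes v: "v \<in> Nn" and w: "w \<in> S" shows "v * w \<in> Nn"
  unfolding Nn_def
proof (intro CollectI conjI ballI)
  show "v * w \<in> S" using S_mul Nn_S[OF v] w by blast
  fix w' assume "w' \<in> S"
  then have "w * w' \<in> S" using S_mul w by blast
  then have "pzp p (Tr (v * (w * w')))" using v unfolding Nn_def by blast
  then show "pzp p (Tr (v * w * w'))" by (simp add: mult.assoc)
qed

lemma Nn_intmul: assumes v: "v \<in> Nn" shows "of_int z * v \<in> Nn"
  using Nn_mulS[OF v R_S[OF of_intR]] by (simp add: mult.commute)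

lemma Nn_add: assumes v: "v \<in> Nn" and u: "u \<in> Nn" shows "v + u \<in> Nn"
  unfolding Nn_def
proof (intro CollectI conjI ballI)
  show "v + u \<in> S" using S_add Nn_S[OF v] Nn_S[OF u] by blast
  fix w assume w: "w \<in> S"
  have "Tr ((v + u) * w) = Tr (v * w) + Tr (u * w)"
    using Tr_add[OF Qs_mul[OF S_Qs[OF Nn_S[OF v]] S_Qs[OF w]] Qs_mul[OF S_Qs[OF Nn_S[OF u]] S_Qs[OF w]]]
    by (simp add: distrib_right)
  moreover have "pzp p (Tr (v * w))" "pzp p (Tr (u * w))" using v u w unfolding Nn_def by blast+
  ultimately show "pzp p (Tr ((v + u) * w))" using pzp_add[OF pr] by simp
qed

lemma Nn_pow: assumes v: "v \<in> Nn" shows "v ^ Suc k \<in> Nn"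
  using Nn_mulS[OF v S_pow[OF Nn_S[OF v], of k]] by simp

lemma eps_pR:
  assumes np: "\<not> p \<le> n" and eR: "\<epsilon> \<in> R" and eN: "\<epsilon> \<in> Nn" and idem: "\<epsilon> * \<epsilon> - \<epsilon> \<in> pR"
  shows "\<epsilon> \<in> pR"
proof -
  define E where "E k l = zc (\<epsilon> * b k) l" for k l
  have A: "\<epsilon> * b m = (\<Sum>l<n. of_int (E m l) * b l)" if "m < n" for m
    unfolding E_def by (rule zc_exp[OF mulR[OF eR bR[OF that]]])
  have sq: "\<epsilon> * \<epsilon> * b k = (\<Sum>l<n. of_int (\<Sum>m<n. E k m * E m l) * b l)" if k: "k < n" for k
  proof -
    have "\<epsilon> * \<epsilon> * b k = \<epsilon> * (\<epsilon> * b k)" by (simp add: mult.assoc)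
    also have "\<dots> = \<epsilon> * (\<Sum>m<n. of_int (E k m) * b m)" by (simp only: A[OF k])
    also have "\<dots> = (\<Sum>m<n. of_int (E k m) * (\<epsilon> * b m))" by (simp add: sum_distrib_left algebra_simps)
    also have "\<dots> = (\<Sum>m<n. of_int (E k m) * (\<Sum>l<n. of_int (E m l) * b l))"
      by (rule sum.cong[OF refl]) (simp only: A lessThan_iff)
    also have "\<dots> = (\<Sum>m<n. \<Sum>l<n. of_int (E k m * E m l) * b l)"
      by (simp add: sum_distrib_left mult.assoc)
    also have "\<dots> = (\<Sum>l<n. \<Sum>m<n. of_int (E k m * E m l) * b l)" by (rule sum.swap)
    also have "\<dots> = (\<Sum>l<n. of_int (\<Sum>m<n. E k m * E m l) * b l)"
      by (simp add: sum_distrib_right)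
    finally show ?thesis .
  qed
  have idemE: "\<forall>k\<in>{..<n}. \<forall>l\<in>{..<n}. int p dvd ((\<Sum>m\<in>{..<n}. E k m * E m l) - E k l)"
  proof (intro ballI)
    fix k l assume k: "k \<in> {..<n}" and l: "l \<in> {..<n}"
    then have k': "k < n" and l': "l < n" by auto
    have bk: "b k \<in> R" using bR[OF k'] .
    have "(\<epsilon> * \<epsilon> - \<epsilon>) * b k \<in> pR" using pR_mul[OF idem bk] .
    moreover have "(\<epsilon> * \<epsilon> - \<epsilon>) * b k = \<epsilon> * \<epsilon> * b k - \<epsilon> * b k" by (simp add: algebra_simps)
    ultimately have "\<epsilon> * \<epsilon> * b k - \<epsilon> * b k \<in> pR" by simp
    then have "int p dvd zc (\<epsilon> * \<epsilon> * b k - \<epsilon> * b k) l"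
      using pR_iff[OF diffR[OF mulR[OF mulR[OF eR eR] bk] mulR[OF eR bk]]] l' by blast
    moreover have "zc (\<epsilon> * \<epsilon> * b k - \<epsilon> * b k) l = zc (\<epsilon> * \<epsilon> * b k) l - zc (\<epsilon> * b k) l"
      by (rule zc_diff[OF mulR[OF mulR[OF eR eR] bk] mulR[OF eR bk] l'])
    moreover have "zc (\<epsilon> * \<epsilon> * b k) l = (\<Sum>m<n. E k m * E m l)"
      by (rule zc_unique[OF sq[OF k'] l'])
    moreover have "E k l = zc (\<epsilon> * b k) l" by (simp only: E_def)
    ultimately show "int p dvd ((\<Sum>m\<in>{..<n}. E k m * E m l) - E k l)" by (simp only:)
  qed
  have trE: "Tr \<epsilon> = of_int (\<Sum>k<n. E k k)"
  proof -
    have "Tr \<epsilon> = (\<Sum>k<n. qc (\<epsilon> * b k) k)" by (rule Tr_formula[OF R_Qs[OF eR]])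
    also have "\<dots> = (\<Sum>k<n. of_int (E k k))"
      unfolding E_def by (rule sum.cong[OF refl]) (simp add: zc_eq[OF mulR[OF eR bR]])
    finally show ?thesis by simp
  qed
  have "pzp p (Tr (\<epsilon> * 1))" using eN one_S unfolding Nn_def by blast
  then have pT: "int p dvd (\<Sum>k<n. E k k)" using pzp_Int[OF pr] trE by simp
  have allE: "\<forall>k<n. \<forall>l<n. int p dvd E k l"
  proof (rule ccontr)
    assume "\<not> (\<forall>k<n. \<forall>l<n. int p dvd E k l)"
    then have h: "\<exists>a\<in>{..<n}. \<exists>c\<in>{..<n}. \<not> int p dvd E a c" by auto
    have pri: "prime (int p)" using pr by simp
    from idem_trace[OF pri finite_lessThan idemE h] obtain r where
      r: "1 \<le> r" "r \<le> card {..<n::nat}" "int p dvd (\<Sum>i\<in>{..<n}. E i i) - int r" by blast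
    have "int p dvd (\<Sum>i<n. E i i) - ((\<Sum>i<n. E i i) - int r)" by (rule dvd_diff[OF pT r(3)])
    then have "int p dvd int r" by simp
    then have "p dvd r" by simp
    then have "p \<le> r" using r(1) by (simp add: dvd_imp_le)
    then show False using r(2) np by (simp only: card_lessThan)
  qed
  have ebk: "\<epsilon> * b k \<in> pR" if k: "k < n" for k
    using pR_iff[OF mulR[OF eR bR[OF k]]] allE k unfolding E_def by blast
  have "\<epsilon> = \<epsilon> * (\<Sum>k<n. of_int (zc 1 k) * b k)"
    using arg_cong[OF zc_exp[OF one], of "\<lambda>t. \<epsilon> * t"] by (simp only: mult_1_right)
  also have "\<dots> = (\<Sum>k<n. of_int (zc 1 k) * (\<epsilon> * b k))"
    by (simp add: sum_distrib_left algebra_simps)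
  also have "\<dots> \<in> pR" by (rule pR_sum) (auto intro: pR_intmul ebk)
  finally show ?thesis .
qed

definition pS where "pS = {of_nat p * y | y. y \<in> S}"

lemma nil: assumes np: "\<not> p \<le> n" and v: "v \<in> Nn" shows "\<exists>t. v ^ t \<in> pS"
proof -
  obtain r0 s where rs: "v = r0 / of_nat s" "r0 \<in> R" "\<not> p dvd s" using Nn_S[OF v] S_iff by blast
  have s0: "s \<noteq> 0" using rs(3) by (metis dvd_0_right)
  have rho: "r0 = of_int (int s) * v" using rs s0 by simp
  have rN: "r0 \<in> Nn" unfolding rho by (rule Nn_intmul[OF v])
  obtain r where r: "r \<ge> 1" "r0 ^ (2 * r) - r0 ^ r \<in> pR" using pigeon[OF rs(2)] by blast
  have pw: "r0 ^ k \<in> R" for k by (induction k) (auto simp: one intro: mulR rs(2))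
  have eN: "r0 ^ r \<in> Nn" using Nn_pow[OF rN, of "r - 1"] r(1) by simp
  have "r0 ^ r * r0 ^ r - r0 ^ r = r0 ^ (2 * r) - r0 ^ r" by (simp add: power_add[symmetric] mult_2)
  then have "r0 ^ r \<in> pR" using eps_pR[OF np pw eN] r(2) by simp
  then obtain y where y: "r0 ^ r = of_nat p * y" "y \<in> R" unfolding pR_def by blast
  have "v ^ r = of_nat p * (y / of_nat (s ^ r))" using rs(1) y(1) by (simp add: power_divide)
  moreover have "y / of_nat (s ^ r) \<in> S"
    using S_div[OF R_S[OF y(2)]] rs(3) pr by (metis prime_dvd_power)
  ultimately show ?thesis unfolding pS_def by blast
qed

end

lemma common_denom_set:
  fixes A :: "rat set"
  assumes "finite A"
  shows "\<exists>d::int. d > 0 \<and> (\<forall>q\<in>A. of_int d * q \<in> \<int>)"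
  using assms
proof (induction A rule: finite_induct)
  case empty then show ?case by (intro exI[of _ 1]) auto
next
  case (insert q A)
  then obtain d where d: "d > 0" "\<forall>q\<in>A. of_int d * q \<in> \<int>" by blast
  obtain a e where ae: "quotient_of q = (a, e)" by (cases "quotient_of q")
  have e: "e > 0" using quotient_of_denom_pos[OF ae] .
  have qm: "q = of_int a / of_int e" using quotient_of_div[OF ae] .
  show ?case
  proof (intro exI[of _ "d * e"] conjI ballI)
    show "d * e > 0" using d e by simp
    fix q' assume "q' \<in> insert q A"
    then consider "q' \<in> A" | "q' = q" by blast
    then show "of_int (d * e) * q' \<in> \<int>"
    proof cases
      case 1
      then have "of_int d * q' \<in> \<int>" using d by blast
      moreover have "of_int (d * e) * q' = of_int e * (of_int d * q')" by (simp add: mult_ac)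
      ultimately show ?thesis by (metis Ints_mult Ints_of_int)
    next
      case 2
      have "of_int (d * e) * q = of_int (d * a)" using e unfolding qm by simp
      then show ?thesis using 2 by (metis Ints_of_int)
    qed
  qed
qed

context ordctx begin

lemma n_pos: "n > 0"
proof (rule ccontr)
  assume "\<not> n > 0"
  then have "R = {0}" unfolding Rdef by auto
  then show False using one by simp
qed

lemma Tr_sum: "finite A \<Longrightarrow> (\<And>i. i \<in> A \<Longrightarrow> f i \<in> Qs) \<Longrightarrow> Tr (sum f A) = (\<Sum>i\<in>A. Tr (f i))"
proof (induction A rule: finite_induct)
  case empty
  have "Tr 0 = Tr (of_rat 0 * 1)" by simp
  also have "\<dots> = 0" using Tr_rat[OF R_Qs[OF one], of 0] by simp
  finally show ?case by simp
next
  case (insert a A)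
  have "Tr (f a + sum f A) = Tr (f a) + Tr (sum f A)"
    by (rule Tr_add) (use insert.prems insert.hyps in \<open>auto intro: Qs_sum\<close>)
  then show ?case using insert by simp
qed

lemma Tr_zero: "Tr 0 = 0" using Tr_sum[of "{}"] by simp

lemma Tr_lin: assumes x: "x \<in> Qs"
  shows "Tr (x * (\<Sum>k<n. of_rat (c k) * b k)) = (\<Sum>k<n. c k * Tr (x * b k))"
proof -
  have "x * (\<Sum>k<n. of_rat (c k) * b k) = (\<Sum>k<n. of_rat (c k) * (x * b k))"
    by (simp add: sum_distrib_left algebra_simps)
  moreover have "Tr (\<Sum>k<n. of_rat (c k) * (x * b k)) = (\<Sum>k<n. Tr (of_rat (c k) * (x * b k)))"
    by (rule Tr_sum) (auto intro: Qs_rat Qs_mul x bQs)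
  moreover have "Tr (of_rat (c k) * (x * b k)) = c k * Tr (x * b k)" if "k < n" for k
    by (rule Tr_rat[OF Qs_mul[OF x bQs[OF that]]])
  ultimately show ?thesis by simp
qed

lemma Tr_nondeg: assumes x: "x \<in> Qs" and h: "\<forall>l<n. Tr (x * b l) = 0" shows "x = 0"
proof (rule ccontr)
  assume x0: "x \<noteq> 0"
  have iQ: "inverse x \<in> Qs" by (rule Qs_inverse[OF x])
  have "Tr (x * inverse x) = Tr (x * (\<Sum>l<n. of_rat (qc (inverse x) l) * b l))"
    using arg_cong[OF qc_exp[OF iQ], of "\<lambda>t. Tr (x * t)"] by simp
  also have "\<dots> = (\<Sum>l<n. qc (inverse x) l * Tr (x * b l))" by (rule Tr_lin[OF x])
  also have "\<dots> = 0" using h by simp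
  finally have "Tr 1 = 0" using x0 by simp
  then show False using Tr_one n_pos by simp
qed

end

context ordp begin

lemma D_Qs: "x \<in> D \<Longrightarrow> x \<in> Qs" using D_iff by blast

lemma zero_D: "0 \<in> D" unfolding D_iff using Tr_zero zeroR R_Qs by simp

lemma disc_exists: "\<exists>d::nat. d > 0 \<and> (\<forall>x\<in>D. of_nat d * x \<in> R)"
proof -
  define G where "G k l = Tr (b k * b l)" for k l
  have inj: "\<forall>k<n. c k = 0" if h: "\<forall>l<n. (\<Sum>k<n. c k * G k l) = 0" for c
  proof -
    define x where "x = (\<Sum>k<n. of_rat (c k) * b k)"
    have xQ: "x \<in> Qs" unfolding x_def by (rule Qs_rep_in)
    have "Tr (x * b l) = 0" if l: "l < n" for l
    proof -
      have "Tr (x * b l) = Tr (b l * x)" by (simp add: mult.commute)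
      also have "\<dots> = (\<Sum>k<n. c k * Tr (b l * b k))" unfolding x_def by (rule Tr_lin[OF bQs[OF l]])
      also have "\<dots> = (\<Sum>k<n. c k * G k l)" unfolding G_def by (simp add: mult.commute)
      finally show ?thesis using h l by simp
    qed
    then have "x = 0" using Tr_nondeg[OF xQ] by blast
    then show ?thesis using Qindep unfolding x_def by blast
  qed
  obtain H where H: "\<forall>c k. k < n \<longrightarrow> (\<Sum>l<n. H k l * (\<Sum>k'<n. c k' * G k' l)) = c k"
    using lin_solve[of n G] inj by blast
  have "finite ((\<lambda>(k, l). H k l) ` ({..<n} \<times> {..<n}))" by simp
  from common_denom_set[OF this] obtain d where d: "d > 0"
    "\<forall>q\<in>(\<lambda>(k, l). H k l) ` ({..<n} \<times> {..<n}). of_int d * q \<in> \<int>" by blast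
  have dH: "of_int d * H k l \<in> \<int>" if "k < n" "l < n" for k l
    using d(2) that by force
  have "\<forall>x\<in>D. of_nat (nat d) * x \<in> R"
  proof
    fix x assume xD: "x \<in> D"
    have xQ: "x \<in> Qs" using D_Qs[OF xD] .
    define c where "c k = qc x k" for k
    have zl: "(\<Sum>k'<n. c k' * G k' l) \<in> \<int>" if l: "l < n" for l
    proof -
      have "Tr (b l * x) = (\<Sum>k<n. c k * Tr (b l * b k))"
        unfolding c_def using arg_cong[OF qc_exp[OF xQ], of "\<lambda>t. Tr (b l * t)"] Tr_lin[OF bQs[OF l]]
        by simp
      moreover have "Tr (x * b l) \<in> \<int>" using xD bR[OF l] D_iff by blast
      ultimately show ?thesis unfolding G_def by (simp add: mult.commute)
    qed
    have "qc (of_int d * x) k \<in> \<int>" if k: "k < n" for k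
    proof -
      have "qc (of_int d * x) k = of_int d * c k"
        unfolding c_def using qc_rat[OF xQ k, of "of_int d"] by simp
      also have "\<dots> = of_int d * (\<Sum>l<n. H k l * (\<Sum>k'<n. c k' * G k' l))" using H k by simp
      also have "\<dots> = (\<Sum>l<n. (of_int d * H k l) * (\<Sum>k'<n. c k' * G k' l))"
        by (simp add: sum_distrib_left mult.assoc)
      also have "\<dots> \<in> \<int>" by (rule Ints_sum) (use dH k zl in auto)
      finally show ?thesis .
    qed
    then have "of_int d * x \<in> R" using Qs_intR Qs_rat[OF xQ, of "of_int d"] by simp
    then show "of_nat (nat d) * x \<in> R" using d(1) by simp
  qed
  then show ?thesis using d(1) by (intro exI[of _ "nat d"]) auto
qed

end

lemma sum_closed_set:
  fixes m :: nat
  assumes "0 \<in> P" "\<And>x y. x \<in> P \<Longrightarrow> y \<in> P \<Longrightarrow> x + y \<in> P" "\<forall>i<m. h i \<in> P"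
  shows "(\<Sum>i<m. h i) \<in> P"
  using assms(3)
proof (induction m)
  case 0 then show ?case using assms(1) by simp
next
  case (Suc m) then show ?case using assms(2) by simp
qed

context ordp begin

lemma zero_Nn: "0 \<in> Nn" unfolding Nn_def using zero_S Tr_zero pzp_zero[OF pr] by simp

lemma main_contra:
  fixes a :: nat
  assumes np: "\<not> p \<le> n"
    and a0: "a > 0"
    and ma: "0 < multiplicity p a"
    and md: "multiplicity p a < multiplicity p (red_disc R)"
    and inv: "invertible_at R p
           {of_nat (red_disc R) * x + of_nat a * r | x r.
              x \<in> trace_dual (frac_field R) R \<and> r \<in> R}"
  shows False
proof -
  define \<delta> where "\<delta> = red_disc R"
  have \<delta>def: "\<delta> = (LEAST d::nat. d > 0 \<and> (\<forall>x\<in>D. of_nat d * x \<in> R))"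
    unfolding \<delta>_def red_disc_def D_def by simp
  have \<delta>prop: "\<delta> > 0 \<and> (\<forall>x\<in>D. of_nat \<delta> * x \<in> R)"
    unfolding \<delta>def using disc_exists by (rule LeastI_ex)
  have \<delta>min: "\<delta> \<le> d" if "d > 0" "\<forall>x\<in>D. of_nat d * x \<in> R" for d
    unfolding \<delta>def by (rule Least_le) (use that in auto)
  define Iset where "Iset = {of_nat \<delta> * x + of_nat a * r | x r. x \<in> D \<and> r \<in> R}"
  have inv': "invertible_at R p Iset" using inv unfolding Iset_def \<delta>_def D_def .
  then obtain J where J: "J \<subseteq> frac_field R" "0 \<in> J" "\<forall>x\<in>J. \<forall>y\<in>J. x + y \<in> J"
    "\<forall>r\<in>S. \<forall>x\<in>J. r * x \<in> J" "ideal_mult (ideal_mult Iset S) J = S"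
    unfolding invertible_at_def S_def by blast
  have Jadd: "x + y \<in> J" if "x \<in> J" "y \<in> J" for x y using J(3) that by blast
  have Jmul: "r * x \<in> J" if "r \<in> S" "x \<in> J" for r x using J(4) that by blast
  have prod: "f * s * g \<in> S" if f: "f \<in> Iset" and s: "s \<in> S" and g: "g \<in> J" for f s g
  proof -
    have "f * s \<in> ideal_mult Iset S"
      unfolding ideal_mult_def
      by (rule CollectI, rule exI[of _ 1], rule exI[of _ "\<lambda>_. f"], rule exI[of _ "\<lambda>_. s"]) (use f s in simp)
    then have "f * s * g \<in> ideal_mult (ideal_mult Iset S) J"
      unfolding ideal_mult_def[of "ideal_mult Iset S" J]
      by (intro CollectI exI[of _ 1] exI[of _ "\<lambda>_. f * s"] exI[of _ "\<lambda>_. g"]) (use g in simp)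
    then show ?thesis using J(5) by simp
  qed
  have aJ: "of_nat a * g \<in> S" if g: "g \<in> J" for g
  proof -
    have "of_nat \<delta> * 0 + of_nat a * 1 \<in> Iset" unfolding Iset_def using zero_D one by blast
    from prod[OF this one_S g] show ?thesis by simp
  qed
  have dJ: "of_nat \<delta> * x * g \<in> S" if x: "x \<in> D" and g: "g \<in> J" for x g
  proof -
    have "of_nat \<delta> * x + of_nat a * 0 \<in> Iset" unfolding Iset_def using x zeroR by blast
    from prod[OF this one_S g] show ?thesis by simp
  qed
  have a0': "(of_nat a :: 'a) \<noteq> 0" using a0 by simp
  have ratio: "pzp p (of_nat \<delta> / of_nat a)" using pzp_ratio[OF pr a0] md unfolding \<delta>_def by simp
  define P where "P = {v + of_nat a * g | v g. v \<in> Nn \<and> g \<in> J}"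
  have P0: "0 \<in> P" unfolding P_def using zero_Nn J(2) by force
  have Padd: "x + y \<in> P" if "x \<in> P" "y \<in> P" for x y
  proof -
    from that obtain v g v' g' where "x = v + of_nat a * g" "v \<in> Nn" "g \<in> J"
      "y = v' + of_nat a * g'" "v' \<in> Nn" "g' \<in> J" unfolding P_def by blast
    then have "x + y = (v + v') + of_nat a * (g + g')" by (simp add: algebra_simps)
    moreover have "v + v' \<in> Nn" using Nn_add \<open>v \<in> Nn\<close> \<open>v' \<in> Nn\<close> by blast
    moreover have "g + g' \<in> J" using Jadd \<open>g \<in> J\<close> \<open>g' \<in> J\<close> by blast
    ultimately show ?thesis unfolding P_def by blast
  qed
  have fsg: "f * s * g \<in> P" if f: "f \<in> Iset" and s: "s \<in> S" and g: "g \<in> J" for f s g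
  proof -
    from f obtain x r where fx: "f = of_nat \<delta> * x + of_nat a * r" "x \<in> D" "r \<in> R"
      unfolding Iset_def by blast
    have xQ: "x \<in> Qs" using D_Qs[OF fx(2)] .
    have sg: "s * g \<in> J" using Jmul[OF s g] .
    have rsg: "r * s * g \<in> J" using Jmul[OF S_mul[OF R_S[OF fx(3)] s] g] .
    have v: "of_nat \<delta> * x * s * g \<in> Nn"
      unfolding Nn_def
    proof (intro CollectI conjI ballI)
      show "of_nat \<delta> * x * s * g \<in> S" using dJ[OF fx(2) sg] by (simp add: mult.assoc)
      fix w assume w: "w \<in> S"
      define \<sigma> where "\<sigma> = s * w * (of_nat a * g)"
      have \<sigma>S: "\<sigma> \<in> S" unfolding \<sigma>_def using S_mul[OF S_mul[OF s w] aJ[OF g]] .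
      have r: "of_rat (of_nat \<delta> / of_nat a) = (of_nat \<delta> / of_nat a :: 'a)" by (simp add: of_rat_divide)
      have c1: "(of_nat \<delta> / of_nat a :: 'a) * (x * (s * w * (of_nat a * g))) = (of_nat \<delta> / of_nat a * of_nat a) * (x * s * g * w)"
        by (simp only: mult_ac)
      have c2: "(of_nat \<delta> / of_nat a :: 'a) * of_nat a = of_nat \<delta>" using a0' by simp
      have eq: "of_nat \<delta> * x * s * g * w = of_rat (of_nat \<delta> / of_nat a) * (x * \<sigma>)"
        unfolding \<sigma>_def r c1 c2 by (simp only: mult_ac)
      have "Tr (of_nat \<delta> * x * s * g * w) = (of_nat \<delta> / of_nat a) * Tr (x * \<sigma>)"
        unfolding eq by (rule Tr_rat[OF Qs_mul[OF xQ S_Qs[OF \<sigma>S]]])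
      moreover have "zp p (Tr (x * \<sigma>))" by (rule D_S_zp[OF fx(2) \<sigma>S])
      ultimately show "pzp p (Tr (of_nat \<delta> * x * s * g * w))" using pzp_zp[OF pr ratio] by simp
    qed
    have "f * s * g = of_nat \<delta> * x * s * g + of_nat a * (r * s * g)"
      unfolding fx(1) by (simp add: algebra_simps)
    then show ?thesis unfolding P_def using v rsg by blast
  qed
  have FG: "F * G \<in> P" if F: "F \<in> ideal_mult Iset S" and G: "G \<in> J" for F G
  proof -
    have "\<exists>(m::nat) f s. F = (\<Sum>i<m. f i * s i) \<and> (\<forall>i<m. f i \<in> Iset \<and> s i \<in> S)"
      using F unfolding ideal_mult_def by (simp only: mem_Collect_eq)
    then obtain m :: nat and f s where Fm: "F = (\<Sum>i<m. f i * s i)" "\<forall>i<m. f i \<in> Iset \<and> s i \<in> S"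
      by blast
    have "F * G = (\<Sum>i<m. f i * s i * G)" unfolding Fm(1) by (simp add: sum_distrib_right)
    also have "\<dots> \<in> P"
    proof -
      have "\<forall>i<m. f i * s i * G \<in> P"
      proof (intro allI impI)
        fix i assume "i < m"
        then have "f i \<in> Iset" "s i \<in> S" using Fm(2) by auto
        then show "f i * s i * G \<in> P" using fsg[OF _ _ G] by blast
      qed
      then show ?thesis using sum_closed_set[where P=P and m=m and h="\<lambda>i. f i * s i * G", OF P0 Padd] by simp
    qed
    finally show ?thesis .
  qed
  have "1 \<in> ideal_mult (ideal_mult Iset S) J" using J(5) one_S by simp
  then obtain m :: nat and F G where FGm: "1 = (\<Sum>i<m. F i * G i)" "\<forall>i<m. F i \<in> ideal_mult Iset S \<and> G i \<in> J"
    unfolding ideal_mult_def[of "ideal_mult Iset S" J] by blast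
  have "1 \<in> P"
  proof -
    have "\<forall>i<m. F i * G i \<in> P"
    proof (intro allI impI)
      fix i assume "i < m"
      then have "F i \<in> ideal_mult Iset S" "G i \<in> J" using FGm(2) by auto
      then show "F i * G i \<in> P" using FG by blast
    qed
    then have "(\<Sum>i<m. F i * G i) \<in> P"
      using sum_closed_set[where P=P and m=m and h="\<lambda>i. F i * G i", OF P0 Padd] by simp
    then show ?thesis unfolding FGm(1) .
  qed
  then obtain \<nu> g0 where ng: "1 = \<nu> + of_nat a * g0" "\<nu> \<in> Nn" "g0 \<in> J" unfolding P_def by blast
  obtain t where t: "\<nu> ^ t \<in> pS" using nil[OF np ng(2)] by blast
  then obtain \<sigma> where \<sigma>: "\<nu> ^ t = of_nat p * \<sigma>" "\<sigma> \<in> S" unfolding pS_def by blast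
  define k where "k = multiplicity p a"
  define T where "T = t * k"
  have \<nu>S: "\<nu> \<in> S" using Nn_S[OF ng(2)] .
  have \<nu>T: "\<nu> ^ T = of_nat (p ^ k) * \<sigma> ^ k" unfolding T_def using \<sigma>(1)
    by (simp add: power_mult power_mult_distrib)
  define \<psi> where "\<psi> = (\<Sum>i<T. \<nu> ^ i) * g0"
  have \<psi>J: "\<psi> \<in> J" unfolding \<psi>_def by (rule Jmul[OF S_sum[OF _ S_pow[OF \<nu>S]] ng(3)]) auto
  have a\<psi>: "of_nat a * \<psi> = 1 - \<nu> ^ T"
  proof -
    have "1 - \<nu> = of_nat a * g0" using ng(1) by (simp add: algebra_simps)
    then have "1 - \<nu> ^ T = of_nat a * g0 * (\<Sum>i<T. \<nu> ^ i)" by (simp add: one_diff_power_eq)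
    then show ?thesis unfolding \<psi>_def by (simp add: algebra_simps)
  qed
  have kd: "p ^ k dvd \<delta>" using md unfolding k_def \<delta>_def by (intro multiplicity_dvd') simp
  then obtain d' where d': "\<delta> = p ^ k * d'" by (auto simp: dvd_def)
  obtain u where u: "a = p ^ k * u" "\<not> p dvd u"
    using multiplicity_decompose'[of a p] a0 pr unfolding k_def by (metis not_prime_unit not_gr0)
  have d'0: "d' > 0" using \<delta>prop d' by (simp add: gr0I)
  have u0: "u > 0" using u a0 by (simp add: gr0I)
  have k1: "k \<ge> 1" using ma unfolding k_def by simp
  have pk: "p ^ k > 1" using one_less_power[OF prime_gt_1_nat[OF pr], of k] k1 by simp
  have d'R: "of_nat d' * x \<in> R" if xD: "x \<in> D" for x
  proof -
    have dxR: "of_nat \<delta> * x \<in> R" using \<delta>prop xD by blast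
    have "of_nat \<delta> * x * \<psi> \<in> S" using dJ[OF xD \<psi>J] .
    then have "of_nat u * (of_nat \<delta> * x * \<psi>) \<in> S" using S_intmul[of _ "int u"] by simp
    moreover have "of_nat u * (of_nat \<delta> * x * \<psi>) = of_nat d' * x * (of_nat a * \<psi>)"
      unfolding d' u by (simp add: algebra_simps)
    ultimately have A: "of_nat d' * x * (1 - \<nu> ^ T) \<in> S" using a\<psi> by simp
    have "of_nat d' * x * \<nu> ^ T = (of_nat \<delta> * x) * \<sigma> ^ k" unfolding \<nu>T d' by (simp add: algebra_simps)
    moreover have "(of_nat \<delta> * x) * \<sigma> ^ k \<in> S" by (rule S_mul[OF R_S[OF dxR] S_pow[OF \<sigma>(2)]])
    ultimately have B: "of_nat d' * x * \<nu> ^ T \<in> S" by (simp only:)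
    have "of_nat d' * x = of_nat d' * x * (1 - \<nu> ^ T) + of_nat d' * x * \<nu> ^ T" by (simp add: algebra_simps)
    then have "of_nat d' * x \<in> S" using S_add[OF A B] by simp
    then obtain r s where rs: "of_nat d' * x = r / of_nat s" "r \<in> R" "\<not> p dvd s" unfolding S_iff by blast
    have s0: "s \<noteq> 0" using rs(3) by (metis dvd_0_right)
    have "of_nat (s * d') * x = of_nat s * (of_nat d' * x)" by (simp add: mult.assoc)
    also have "\<dots> = of_nat s * (r / of_nat s)" by (simp only: rs(1))
    also have "\<dots> = r" using s0 by simp
    finally have sR: "of_nat (s * d') * x \<in> R" using rs(2) by simp
    have cop: "coprime s (p ^ k)" using rs(3) pr
      by (metis coprime_commute coprime_power_right_iff prime_imp_coprime)
    have "gcd (s * d') (p ^ k * d') = d'"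
      using cop by (simp add: gcd_mult_distrib_nat[symmetric] mult.commute)
    then have gn: "gcd (s * d') \<delta> = d'" unfolding d' .
    have g: "gcd (int (s * d')) (int \<delta>) = int d'" using gn by (simp only: gcd_int_int_eq)
    obtain \<alpha> \<beta> where ab: "\<alpha> * int (s * d') + \<beta> * int \<delta> = gcd (int (s * d')) (int \<delta>)"
      using bezout_int by blast
    have e0: "\<alpha> * int (s * d') + \<beta> * int \<delta> = int d'" using ab g by (simp only:)
    have e: "(of_int \<alpha> * of_nat (s * d') + of_int \<beta> * of_nat \<delta> :: 'a) = of_nat d'"
      using arg_cong[OF e0, of "of_int :: int \<Rightarrow> 'a"] by (simp only: of_int_add of_int_mult of_int_of_nat_eq)
    have "of_nat d' * x = of_int \<alpha> * (of_nat (s * d') * x) + of_int \<beta> * (of_nat \<delta> * x)"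
    proof -
      have "of_int \<alpha> * (of_nat (s * d') * x) + of_int \<beta> * (of_nat \<delta> * x)
          = (of_int \<alpha> * of_nat (s * d') + of_int \<beta> * of_nat \<delta>) * (x :: 'a)"
        by (simp only: distrib_right mult.assoc)
      then show ?thesis unfolding e by simp
    qed
    then show ?thesis using addR[OF intmulR[OF sR] intmulR[OF dxR]] by simp
  qed
  have "\<delta> \<le> d'" using \<delta>min[OF d'0] d'R by blast
  moreover have "\<delta> > d'" unfolding d' using pk d'0 by simp
  ultimately show False by simp
qed

end

theorem proposition5p33:
  fixes R :: "'a::field_char_0 set" and n p a :: nat
  assumes "is_order R n"
    and "prime p"
    and "a > 0"
    and "0 < multiplicity p a"
    and "multiplicity p a < multiplicity p (red_disc R)"
    and "invertible_at R p
           {of_nat (red_disc R) * x + of_nat a * r | x r.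
              x \<in> trace_dual (frac_field R) R \<and> r \<in> R}"
  shows "p \<le> n"
proof (rule ccontr)
  assume np: "\<not> p \<le> n"
  have io: "1 \<in> R \<and> (\<forall>x\<in>R. \<forall>y\<in>R. x + y \<in> R \<and> - x \<in> R \<and> x * y \<in> R) \<and>
     (\<exists>b :: nat \<Rightarrow> 'a.
        R = {\<Sum>i<n. of_int (c i) * b i | c. True} \<and>
        (\<forall>c. (\<Sum>i<n. of_int (c i) * b i) = 0 \<longrightarrow> (\<forall>i<n. c i = 0)))"
    using assms(1) unfolding is_order_def .
  then have "\<exists>b :: nat \<Rightarrow> 'a.
        R = {\<Sum>i<n. of_int (c i) * b i | c. True} \<and>
        (\<forall>c. (\<Sum>i<n. of_int (c i) * b i) = 0 \<longrightarrow> (\<forall>i<n. c i = 0))" by (rule conjunct2[THEN conjunct2])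
  then obtain b :: "nat \<Rightarrow> 'a" where bb: "R = {\<Sum>i<n. of_int (c i) * b i | c. True} \<and>
        (\<forall>c. (\<Sum>i<n. of_int (c i) * b i) = 0 \<longrightarrow> (\<forall>i<n. c i = 0))" ..
  have oc: "ordctx R n b"
  proof (rule ordctx.intro)
    show "1 \<in> R" using io by (rule conjunct1)
    show "\<forall>x\<in>R. \<forall>y\<in>R. x + y \<in> R \<and> - x \<in> R \<and> x * y \<in> R" using io by (rule conjunct2[THEN conjunct1])
    show "R = {\<Sum>i<n. of_int (c i) * b i | c. True}" using bb by (rule conjunct1)
    show "\<forall>c. (\<Sum>i<n. of_int (c i) * b i) = 0 \<longrightarrow> (\<forall>i<n. c i = 0)" using bb by (rule conjunct2)
  qed
  have "ordp R n b p" by (rule ordp.intro[OF oc ordp_axioms.intro[OF assms(2)]])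
  then interpret ordp R n b p .
  show False by (rule main_contra[OF np assms(3-6)])
qed

end
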